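(* Let $U\in\mathcal{P}(n,d)$ and let $L^{tr}=\mathbf{e}^d\mathbf{n}^{n-d}\in\mathcal{P}(n,d)$. Let $\Lambda=\Lambda_{M[U,L^{tr}]}$. Then $\mathrm{st}_{L^{tr}}(C)=\Lambda(\mathcal{E}(C))$ for all $C\in\mathcal{P}[U,L^{tr}]$. In particular, \[ \mathcal{S}_{\mathsf{lex}}(M[U,L^{tr}])=\{\mathrm{st}_{L^{tr}}(C) : C\in\mathcal{P}[U,L^{tr}]\}. \]
   Context: $\mathcal{P}(n,d)$ is the set of words $C=C_1\cdots C_n$ in letters $\mathbf{e}$ (east step $(1,0)$) and $\mathbf{n}$ (north step $(0,1)$) with exactly $d$ letters $\mathbf{e}$ (lattice paths from $(0,0)$ to $(d,n-d)$). $\mathcal{E}(C)=\{i\in[n]:C_i=\mathbf{e}\}$. For $U,L\in\mathcal{P}(n,d)$, $U$ is weakly above $L$ if every prefix $L_1\cdots L_k$ contains at least as many $\mathbf{e}$'s as $U_1\cdots U_k$. $\mathcal{P}[U,L]$ is the set of $C\in\mathcal{P}(n,d)$ weakly below $U$ and weakly above $L$, and the lattice path matroid $M[U,L]$ is the matroid on $[n]$ with set of bases $\{\mathcal{E}(C):C\in\mathcal{P}[U,L]\}$. Statistic: for $C\in\mathcal{P}(n,d)$ scan positions from left to right and mark position $i$ with $C_i=\mathbf{e}$ if the number of $j<i$ with $C_j=\mathbf{n}$ equals the number of $j<i$ with $C_j=\mathbf{e}$ that are unmarked. Then $\mathrm{st}_{L^{tr}}(C)\subseteq\mathcal{E}(C)$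 is the set of unmarked positions $i$ with $C_i=\mathbf{e}$. For a matroid $M$ on finite $E\subset\mathbb{N}$ with bases $\mathcal{B}(M)$: $\mathcal{S}_{\mathsf{lex}}(M)=\{\tau\subseteq E:\prod_{i\in\tau}x_i\notin\mathrm{in}(I(V_M))\}$, where $V_M=\{\mathbf{e}_B:B\in\mathcal{B}(M)\}$ (characteristic vectors), $I(V_M)\subseteq\mathbb{R}[x_e:e\in E]$ is its vanishing ideal and the initial ideal is taken for the lexicographic order with $x_e\succ x_f$ for $e<f$ ($\mathcal{S}_{\mathsf{lex}}=\{\emptyset\}$ if $E=\emptyset$). There is a unique family of bijections $\Lambda_M:\mathcal{B}(M)\to\mathcal{S}_{\mathsf{lex}}(M)$, indexed by all matroids $M$ with ground set a finite subset of $\mathbb{N}$, such that for $M$ with nonempty ground set, $m$ its largest element, and $B\in\mathcal{B}(M)$: $\Lambda_M(B)\subseteq B$; $\Lambda_M(B)=\Lambda_{M\backslash m}(B)$ if $m\notin B$; $\Lambda_M(B)\setminus\{m\}=\Lambda_{M/m}(B\setminus\{m\})$ if $m\in B$. $\Lambda_{M[U,L]}$ refers to this family. *)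

theory Defs
  imports Complex_Main "HOL-Library.Poly_Mapping"
begin

datatype step = StE | StN

definition paths :: "nat \<Rightarrow> nat \<Rightarrow> step list set" where
  "paths n d = {C. length C = n \<and> length (filter (\<lambda>s. s = StE) C) = d}"

(* positions are 1-based: position i corresponds to C ! (i - 1) *)
definition Epos :: "step list \<Rightarrow> nat set" where
  "Epos C = {i. 1 \<le> i \<and> i \<le> length C \<and> C ! (i - 1) = StE}"

definition num_e :: "step list \<Rightarrow> nat" where
  "num_e C = length (filter (\<lambda>s. s = StE) C)"

definition weakly_above :: "step list \<Rightarrow> step list \<Rightarrow> bool" where
  "weakly_above U L \<longleftrightarrow> (\<forall>k \<le> length L. num_e (take k U) \<le> num_e (take k L))"

definition paths_between :: "nat \<Rightarrow> nat \<Rightarrow> step list \<Rightarrow> step list \<Rightarrow> step list set" where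
  "paths_between n d U L = {C \<in> paths n d. weakly_above U C \<and> weakly_above C L}"

definition Ltr :: "nat \<Rightarrow> nat \<Rightarrow> step list" where
  "Ltr n d = replicate d StE @ replicate (n - d) StN"

(* The statistic st_{L^tr}: scan left to right; a = number of n's seen so far,
   b = number of unmarked e's seen so far; an e at position i is marked iff a = b. *)
fun st_aux :: "step list \<Rightarrow> nat \<Rightarrow> nat \<Rightarrow> nat \<Rightarrow> nat set" where
  "st_aux [] i a b = {}"
| "st_aux (StN # cs) i a b = st_aux cs (Suc i) (Suc a) b"
| "st_aux (StE # cs) i a b =
     (if a = b then st_aux cs (Suc i) a b else insert i (st_aux cs (Suc i) a (Suc b)))"

definition st_Ltr :: "step list \<Rightarrow> nat set" where
  "st_Ltr C = st_aux C 1 0 0"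

definition matroid :: "nat set \<Rightarrow> nat set set \<Rightarrow> bool" where
  "matroid E Bs \<longleftrightarrow> finite E \<and> Bs \<noteq> {} \<and> (\<forall>B\<in>Bs. B \<subseteq> E) \<and>
     (\<forall>B1\<in>Bs. \<forall>B2\<in>Bs. \<forall>x\<in>B1 - B2. \<exists>y\<in>B2 - B1. insert y (B1 - {x}) \<in> Bs)"

definition del_bases :: "nat set set \<Rightarrow> nat \<Rightarrow> nat set set" where
  "del_bases Bs m = (if \<exists>B\<in>Bs. m \<notin> B then {B\<in>Bs. m \<notin> B} else (\<lambda>B. B - {m}) ` Bs)"

definition con_bases :: "nat set set \<Rightarrow> nat \<Rightarrow> nat set set" where
  "con_bases Bs m = (if \<exists>B\<in>Bs. m \<in> B then (\<lambda>B. B - {m}) ` {B\<in>Bs. m \<in> B} else Bs)"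

definition lattice_path_matroid_bases ::
  "nat \<Rightarrow> nat \<Rightarrow> step list \<Rightarrow> step list \<Rightarrow> nat set set" where
  "lattice_path_matroid_bases n d U L = Epos ` paths_between n d U L"

type_synonym mon = "nat \<Rightarrow>\<^sub>0 nat"
type_synonym rpoly = "mon \<Rightarrow>\<^sub>0 real"

definition poly_in :: "nat set \<Rightarrow> rpoly set" where
  "poly_in E = {f. \<forall>\<alpha>\<in>Poly_Mapping.keys f. Poly_Mapping.keys \<alpha> \<subseteq> E}"

definition peval :: "rpoly \<Rightarrow> (nat \<Rightarrow> real) \<Rightarrow> real" where
  "peval f v = (\<Sum>\<alpha>\<in>Poly_Mapping.keys f. Poly_Mapping.lookup f \<alpha> * (\<Prod>i\<in>Poly_Mapping.keys \<alpha>. v i ^ Poly_Mapping.lookup \<alpha> i))"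

definition char_vec :: "nat set \<Rightarrow> nat \<Rightarrow> real" where
  "char_vec B = (\<lambda>i. if i \<in> B then 1 else 0)"

definition vanishing_ideal :: "nat set \<Rightarrow> (nat \<Rightarrow> real) set \<Rightarrow> rpoly set" where
  "vanishing_ideal E V = {f \<in> poly_in E. \<forall>v\<in>V. peval f v = 0}"

(* lexicographic order with x_e > x_f for e < f: beta <lex alpha iff at the smallest
   variable where the exponents differ, alpha has the larger exponent *)
definition lex_less :: "mon \<Rightarrow> mon \<Rightarrow> bool" where
  "lex_less \<beta> \<alpha> \<longleftrightarrow> (\<exists>i. (\<forall>j<i. Poly_Mapping.lookup \<beta> j = Poly_Mapping.lookup \<alpha> j) \<and> Poly_Mapping.lookup \<beta> i < Poly_Mapping.lookup \<alpha> i)"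

definition lead_mon :: "rpoly \<Rightarrow> mon" where
  "lead_mon f = (THE \<alpha>. \<alpha> \<in> Poly_Mapping.keys f \<and> (\<forall>\<beta>\<in>Poly_Mapping.keys f. \<beta> = \<alpha> \<or> lex_less \<beta> \<alpha>))"

definition monom :: "mon \<Rightarrow> rpoly" where
  "monom \<alpha> = Poly_Mapping.single \<alpha> 1"

inductive_set ideal_gen :: "nat set \<Rightarrow> rpoly set \<Rightarrow> rpoly set" for E G where
  zero: "0 \<in> ideal_gen E G"
| add: "g \<in> G \<Longrightarrow> h \<in> poly_in E \<Longrightarrow> p \<in> ideal_gen E G \<Longrightarrow> h * g + p \<in> ideal_gen E G"

definition init_ideal_lex :: "nat set \<Rightarrow> rpoly set \<Rightarrow> rpoly set" where
  "init_ideal_lex E I = ideal_gen E {monom (lead_mon f) | f. f \<in> I \<and> f \<noteq> 0}"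

definition sqfree_mon :: "nat set \<Rightarrow> mon" where
  "sqfree_mon \<tau> = (\<Sum>i\<in>\<tau>. Poly_Mapping.single i 1)"

definition S_lex :: "nat set \<Rightarrow> nat set set \<Rightarrow> nat set set" where
  "S_lex E Bs = (if E = {} then {{}} else
     {\<tau>. \<tau> \<subseteq> E \<and> monom (sqfree_mon \<tau>)
            \<notin> init_ideal_lex E (vanishing_ideal E (char_vec ` Bs))})"

definition is_Lambda_family :: "(nat set \<Rightarrow> nat set set \<Rightarrow> nat set \<Rightarrow> nat set) \<Rightarrow> bool" where
  "is_Lambda_family Lam \<longleftrightarrow>
     (\<forall>E Bs. matroid E Bs \<longrightarrow>
        bij_betw (Lam E Bs) Bs (S_lex E Bs) \<and>
        (E \<noteq> {} \<longrightarrow>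
          (\<forall>B\<in>Bs. Lam E Bs B \<subseteq> B \<and>
             (Max E \<notin> B \<longrightarrow> Lam E Bs B = Lam (E - {Max E}) (del_bases Bs (Max E)) B) \<and>
             (Max E \<in> B \<longrightarrow> Lam E Bs B - {Max E} =
                Lam (E - {Max E}) (con_bases Bs (Max E)) (B - {Max E})))))"

end

theory Submission
  imports Defs
begin

fun stp :: "step list \<Rightarrow> nat \<Rightarrow> nat \<Rightarrow> nat \<times> nat" where
  "stp [] a b = (a, b)"
| "stp (StN # cs) a b = stp cs (Suc a) b"
| "stp (StE # cs) a b = (if a = b then stp cs a b else stp cs a (Suc b))"

lemma st_aux_append:
  "st_aux (xs @ ys) i a b = st_aux xs i a b \<union> st_aux ys (i + length xs) (fst (stp xs a b)) (snd (stp xs a b))"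
proof (induction xs arbitrary: i a b)
  case Nil then show ?case by simp
next
  case (Cons x xs) then show ?case by (cases x) auto
qed

lemma stp_append:
  "stp (xs @ ys) a b = stp ys (fst (stp xs a b)) (snd (stp xs a b))"
proof (induction xs arbitrary: a b)
  case Nil then show ?case by simp
next
  case (Cons x xs) then show ?case by (cases x) auto
qed

lemma st_aux_range: "st_aux cs i a b \<subseteq> {i..<i + length cs}"
proof (induction cs arbitrary: i a b)
  case Nil then show ?case by simp
next
  case (Cons x xs)
  have "st_aux xs (Suc i) a' b' \<subseteq> {i..<i + length (x # xs)}" for a' b'
    using Cons.IH[of "Suc i" a' b'] by auto
  then show ?case by (cases x) auto
qed

lemma num_e_Cons: "num_e (x # xs) = (if x = StE then Suc (num_e xs) else num_e xs)"
  by (simp add: num_e_def)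

lemma num_e_append: "num_e (xs @ ys) = num_e xs + num_e ys"
  by (simp add: num_e_def)

lemma num_e_le: "num_e xs \<le> length xs"
  by (simp add: num_e_def)

lemma stp_fst: "fst (stp cs a b) = a + (length cs - num_e cs)"
proof (induction cs arbitrary: a b)
  case Nil then show ?case by simp
next
  case (Cons x xs) then show ?case using num_e_le[of xs] by (cases x) (auto simp: num_e_Cons)
qed

lemma stp_le: "b \<le> a \<Longrightarrow> snd (stp cs a b) \<le> fst (stp cs a b)"
proof (induction cs arbitrary: a b)
  case Nil then show ?case by simp
next
  case (Cons x xs) then show ?case by (cases x) auto
qed

lemma st_aux_card: "finite (st_aux cs i a b) \<and> card (st_aux cs i a b) + b = snd (stp cs a b)"
proof (induction cs arbitrary: i a b)
  case Nil then show ?case by simp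
next
  case (Cons x xs)
  show ?case
  proof (cases x)
    case StE
    have "i \<notin> st_aux xs (Suc i) a (Suc b)" using st_aux_range[of xs "Suc i" a "Suc b"] by auto
    then show ?thesis using Cons[of "Suc i" a "Suc b"] Cons[of "Suc i" a b] StE by auto
  next
    case StN then show ?thesis using Cons[of "Suc i" "Suc a" b] by auto
  qed
qed

lemma st_aux_snoc:
  "st_aux (xs @ [x]) i a b = st_aux xs i a b \<union>
     (if x = StE \<and> fst (stp xs a b) \<noteq> snd (stp xs a b) then {i + length xs} else {})"
  by (cases x) (auto simp: st_aux_append)

lemma stp_snoc:
  "stp (xs @ [x]) a b = (if x = StN then (Suc (fst (stp xs a b)), snd (stp xs a b))
     else if fst (stp xs a b) = snd (stp xs a b) then stp xs a b
     else (fst (stp xs a b), Suc (snd (stp xs a b))))"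
  by (cases x; cases "stp xs a b") (auto simp: stp_append)

lemma take_snoc_le:
  assumes "\<forall>k. num_e (take k xs) \<le> num_e (take k ys)" "length xs = length ys"
    "num_e xs + num_e [x] \<le> num_e ys + num_e [y]"
  shows "num_e (take k (xs @ [x])) \<le> num_e (take k (ys @ [y]))"
proof (cases "k \<le> length xs")
  case True then show ?thesis using assms by simp
next
  case False then show ?thesis using assms by (simp add: num_e_append)
qed

lemma take_single: "take j [x] = (if j = 0 then [] else [x])"
  by (cases j) auto

lemma shift:
  assumes "snd (stp cs a a) < fst (stp cs a a)"
  shows "\<exists>cs'. length cs' = length cs \<and> num_e cs' = Suc (num_e cs) \<and>
     (\<forall>k. num_e (take k cs) \<le> num_e (take k cs')) \<and> st_aux cs' i a a = st_aux cs i a a \<and>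
     stp cs' a a = (fst (stp cs a a) - 1, snd (stp cs a a))"
  using assms
proof (induction cs rule: rev_induct)
  case Nil then show ?case by simp
next
  case (snoc x xs)
  define A where "A = fst (stp xs a a)"
  define B where "B = snd (stp xs a a)"
  have BA: "B \<le> A" using stp_le[of a a xs] by (simp add: A_def B_def)
  show ?case
  proof (cases x)
    case StN
    show ?thesis
    proof (cases "A = B")
      case True
      show ?thesis
        apply (rule exI[of _ "xs @ [StE]"])
        using True StN
        by (auto simp: num_e_append num_e_Cons stp_snoc st_aux_snoc A_def B_def prod_eq_iff take_single intro!: take_snoc_le)
    next
      case False
      then have "snd (stp xs a a) < fst (stp xs a a)" using BA A_def B_def by simp
      from snoc.IH[OF this] obtain xs' where xs': "length xs' = length xs" "num_e xs' = Suc (num_e xs)"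
        "\<forall>k. num_e (take k xs) \<le> num_e (take k xs')" "st_aux xs' i a a = st_aux xs i a a"
        "stp xs' a a = (A - 1, B)" by (auto simp: A_def B_def)
      show ?thesis
        apply (rule exI[of _ "xs' @ [StN]"])
        using False StN xs' BA
        by (auto simp: num_e_append num_e_Cons stp_snoc st_aux_snoc A_def B_def intro!: take_snoc_le)
    qed
  next
    case StE
    have ne: "A \<noteq> B" and lt: "Suc B < A" using snoc.prems StE by (auto simp: stp_snoc A_def B_def split: if_splits)
    then have "snd (stp xs a a) < fst (stp xs a a)" using A_def B_def by simp
    from snoc.IH[OF this] obtain xs' where xs': "length xs' = length xs" "num_e xs' = Suc (num_e xs)"
      "\<forall>k. num_e (take k xs) \<le> num_e (take k xs')" "st_aux xs' i a a = st_aux xs i a a"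
      "stp xs' a a = (A - 1, B)" by (auto simp: A_def B_def)
    show ?thesis
      apply (rule exI[of _ "xs' @ [StE]"])
      using ne lt StE xs' BA
      by (auto simp: num_e_append num_e_Cons stp_snoc st_aux_snoc A_def B_def intro!: take_snoc_le)
  qed
qed


definition Fam :: "nat \<Rightarrow> nat \<Rightarrow> (nat \<Rightarrow> nat) \<Rightarrow> step list set" where
  "Fam n d u = {C \<in> paths n d. \<forall>k\<le>n. u k \<le> num_e (take k C)}"

definition u0 :: "nat \<Rightarrow> nat \<Rightarrow> (nat \<Rightarrow> nat) \<Rightarrow> nat \<Rightarrow> nat" where
  "u0 n d u = (if u (Suc n) \<le> d then u else (\<lambda>_. 1))"

definition u1 :: "nat \<Rightarrow> nat \<Rightarrow> (nat \<Rightarrow> nat) \<Rightarrow> nat \<Rightarrow> nat" where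
  "u1 n d u = (if u (Suc n) \<le> d \<and> 0 < d then u else (\<lambda>_. 1))"

lemma num_e_Nil[simp]: "num_e [] = 0"
  by (simp add: num_e_def)

lemma Fam_mem: "C \<in> Fam n d u \<Longrightarrow> length C = n \<and> num_e C = d"
  by (simp add: Fam_def paths_def num_e_def)

lemma Fam_one: "Fam n d (\<lambda>_. 1) = {}"
  by (auto simp: Fam_def)

lemma Fam_one'[simp]: "Fam n d (\<lambda>_. Suc 0) = {}"
  using Fam_one by simp

lemma Fam_N: "C @ [StN] \<in> Fam (Suc n) d u \<longleftrightarrow> C \<in> Fam n d (u0 n d u)"
proof
  assume a: "C @ [StN] \<in> Fam (Suc n) d u"
  then have l: "length C = n" and e: "num_e C = d" and k: "\<forall>k\<le>Suc n. u k \<le> num_e (take k (C @ [StN]))"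
    using Fam_mem[OF a] by (auto simp: Fam_def num_e_append num_e_Cons num_e_def)
  have k': "\<forall>k\<le>n. u k \<le> num_e (take k C)"
  proof (intro allI impI)
    fix k assume "k \<le> n"
    then have "take k (C @ [StN]) = take k C" using l by simp
    then show "u k \<le> num_e (take k C)" using k \<open>k \<le> n\<close> by (metis le_SucI)
  qed
  have "u (Suc n) \<le> d" using k[rule_format, of "Suc n"] l e by (simp add: num_e_append num_e_Cons)
  then show "C \<in> Fam n d (u0 n d u)" using l e k' by (auto simp: u0_def Fam_def paths_def num_e_def)
next
  assume a: "C \<in> Fam n d (u0 n d u)"
  then have c: "u (Suc n) \<le> d" by (auto simp: u0_def Fam_one split: if_splits)
  then have k: "\<forall>k\<le>n. u k \<le> num_e (take k C)" and l: "length C = n" and e: "num_e C = d"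
    using a Fam_mem[OF a] by (auto simp: Fam_def u0_def)
  show "C @ [StN] \<in> Fam (Suc n) d u"
    unfolding Fam_def paths_def
  proof (intro CollectI conjI allI impI)
    fix k assume "k \<le> Suc n"
    then show "u k \<le> num_e (take k (C @ [StN]))"
      using k l e c by (cases "k \<le> n") (auto simp: num_e_append num_e_Cons le_Suc_eq)
  qed (use l e in \<open>auto simp: num_e_def\<close>)
qed

lemma Fam_E: "C @ [StE] \<in> Fam (Suc n) d u \<longleftrightarrow> C \<in> Fam n (d - 1) (u1 n d u)"
proof
  assume a: "C @ [StE] \<in> Fam (Suc n) d u"
  then have l: "length C = n" and e: "Suc (num_e C) = d" and k: "\<forall>k\<le>Suc n. u k \<le> num_e (take k (C @ [StE]))"
    using Fam_mem[OF a] by (auto simp: Fam_def num_e_append num_e_Cons)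
  have k': "\<forall>k\<le>n. u k \<le> num_e (take k C)"
  proof (intro allI impI)
    fix k assume "k \<le> n"
    then have "take k (C @ [StE]) = take k C" using l by simp
    then show "u k \<le> num_e (take k C)" using k \<open>k \<le> n\<close> by (metis le_SucI)
  qed
  have "u (Suc n) \<le> d" using k[rule_format, of "Suc n"] l e by (simp add: num_e_append num_e_Cons)
  then show "C \<in> Fam n (d - 1) (u1 n d u)" using l e k' by (auto simp: u1_def Fam_def paths_def num_e_def)
next
  assume a: "C \<in> Fam n (d - 1) (u1 n d u)"
  then have c: "u (Suc n) \<le> d" "0 < d" by (auto simp: u1_def Fam_one split: if_splits)
  then have k: "\<forall>k\<le>n. u k \<le> num_e (take k C)" and l: "length C = n" and e: "num_e C = d - 1"
    using a Fam_mem[OF a] by (auto simp: Fam_def u1_def)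
  show "C @ [StE] \<in> Fam (Suc n) d u"
    unfolding Fam_def paths_def
  proof (intro CollectI conjI allI impI)
    fix k assume "k \<le> Suc n"
    then show "u k \<le> num_e (take k (C @ [StE]))"
      using k l e c by (cases "k \<le> n") (auto simp: num_e_append num_e_Cons le_Suc_eq)
  qed (use l e c in \<open>auto simp: num_e_def\<close>)
qed

lemma Fam_snoc: "C \<in> Fam (Suc n) d u \<Longrightarrow> \<exists>C' x. C = C' @ [x]"
  using Fam_mem[of C "Suc n" d u] by (cases C rule: rev_exhaust) auto

lemma Fam_dom:
  assumes "C \<in> Fam n d u" "length C' = n" "num_e C' = d" "\<forall>k. num_e (take k C) \<le> num_e (take k C')"
  shows "C' \<in> Fam n d u"
proof -
  have "\<forall>k\<le>n. u k \<le> num_e (take k C)" using assms(1) by (simp add: Fam_def)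
  then have "\<forall>k\<le>n. u k \<le> num_e (take k C')" using assms(4) le_trans by blast
  then show ?thesis using assms(2,3) by (simp add: Fam_def paths_def num_e_def)
qed

lemma Epos_N: "Epos (C @ [StN]) = Epos C"
  by (auto simp: Epos_def nth_append)

lemma Epos_E: "Epos (C @ [StE]) = insert (Suc (length C)) (Epos C)"
  by (auto simp: Epos_def nth_append)

lemma Epos_sub: "Epos C \<subseteq> {1..length C}"
  by (auto simp: Epos_def)

lemma st_Ltr_snoc: "st_Ltr (C @ [x]) = st_Ltr C \<union>
   (if x = StE \<and> fst (stp C 0 0) \<noteq> snd (stp C 0 0) then {Suc (length C)} else {})"
  by (simp add: st_Ltr_def st_aux_snoc)

lemma st_Ltr_sub: "st_Ltr C \<subseteq> {1..length C}"
  using st_aux_range[of C 1 0 0] by (auto simp: st_Ltr_def)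

lemma st_Ltr_card: "card (st_Ltr C) = snd (stp C 0 0)"
  using st_aux_card[of C 1 0 0] by (simp add: st_Ltr_def)

lemma shiftF:
  assumes "C \<in> Fam n (d - 1) (u1 n d u)" "snd (stp C 0 0) < fst (stp C 0 0)"
  shows "\<exists>C''\<in>Fam n d (u0 n d u). st_Ltr C'' = st_Ltr C"
proof -
  obtain cs' where cs': "length cs' = length C" "num_e cs' = Suc (num_e C)"
     "\<forall>k. num_e (take k C) \<le> num_e (take k cs')" "st_aux cs' 1 0 0 = st_aux C 1 0 0"
    using shift[OF assms(2), of 1] by auto
  have CE: "C @ [StE] \<in> Fam (Suc n) d u" using assms(1) Fam_E by blast
  have "cs' @ [StN] \<in> Fam (Suc n) d u"
    apply (rule Fam_dom[OF CE])
    using cs' Fam_mem[OF CE] by (auto simp: num_e_append num_e_Cons take_single intro!: take_snoc_le)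
  then show ?thesis using cs'(4) Fam_N by (auto simp: st_Ltr_def)
qed

lemma open_pos:
  assumes "C0 \<in> Fam n d (u0 n d u)" "C1 \<in> Fam n (d - 1) (u1 n d u)" "st_Ltr C0 = st_Ltr C1"
  shows "snd (stp C1 0 0) < fst (stp C1 0 0)"
proof -
  have d: "0 < d" using assms(2) by (auto simp: u1_def Fam_one split: if_splits)
  have m0: "length C0 = n" "num_e C0 = d" using Fam_mem[OF assms(1)] by auto
  have m1: "length C1 = n" "num_e C1 = d - 1" using Fam_mem[OF assms(2)] by auto
  have "d \<le> n" using m0 num_e_le[of C0] by simp
  have "snd (stp C0 0 0) \<le> fst (stp C0 0 0)" by (rule stp_le) simp
  then have "card (st_Ltr C0) \<le> n - d" using st_Ltr_card[of C0] stp_fst[of C0 0 0] m0 by simp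
  moreover have "fst (stp C1 0 0) = n - (d - 1)" using stp_fst[of C1 0 0] m1 by simp
  ultimately show ?thesis using st_Ltr_card[of C1] assms(3) d \<open>d \<le> n\<close> by simp
qed

lemma st_rec:
  assumes X0: "X0 = st_Ltr ` Fam n d (u0 n d u)" and X1: "X1 = st_Ltr ` Fam n (d - 1) (u1 n d u)"
  shows "st_Ltr ` Fam (Suc n) d u = X0 \<union> X1 \<union> insert (Suc n) ` (X0 \<inter> X1)"
  unfolding X0 X1
proof (intro equalityI subsetI)
  fix \<tau> assume "\<tau> \<in> (st_Ltr ` Fam (Suc n) d u)"
  then obtain C where C: "C \<in> Fam (Suc n) d u" "\<tau> = st_Ltr C" by auto
  then obtain C' x where Cx: "C = C' @ [x]" using Fam_snoc by blast
  have lC': "length C' = n" using Fam_mem[OF C(1)] Cx by simp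
  show "\<tau> \<in> (st_Ltr ` Fam n d (u0 n d u)) \<union> (st_Ltr ` Fam n (d - 1) (u1 n d u)) \<union> insert (Suc n) ` ((st_Ltr ` Fam n d (u0 n d u)) \<inter> (st_Ltr ` Fam n (d - 1) (u1 n d u)))"
  proof (cases x)
    case StN
    then have "C' \<in> Fam n d (u0 n d u)" using C Cx Fam_N by blast
    then show ?thesis using C Cx StN st_Ltr_snoc[of C' StN] by auto
  next
    case StE
    then have C1: "C' \<in> Fam n (d - 1) (u1 n d u)" using C Cx Fam_E by blast
    show ?thesis
    proof (cases "fst (stp C' 0 0) = snd (stp C' 0 0)")
      case True then show ?thesis using C Cx StE C1 st_Ltr_snoc[of C' StE] by auto
    next
      case False
      then have "snd (stp C' 0 0) < fst (stp C' 0 0)" using stp_le[of 0 0 C'] by simp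
      from shiftF[OF C1 this] obtain C'' where "C'' \<in> Fam n d (u0 n d u)" "st_Ltr C'' = st_Ltr C'" by blast
      then have "st_Ltr C' \<in> (st_Ltr ` Fam n d (u0 n d u)) \<inter> (st_Ltr ` Fam n (d - 1) (u1 n d u))" using C1 by auto
      moreover have "\<tau> = insert (Suc n) (st_Ltr C')" using C Cx StE False st_Ltr_snoc[of C' StE] lC' by auto
      ultimately show ?thesis by blast
    qed
  qed
next
  fix \<tau> assume "\<tau> \<in> (st_Ltr ` Fam n d (u0 n d u)) \<union> (st_Ltr ` Fam n (d - 1) (u1 n d u)) \<union> insert (Suc n) ` ((st_Ltr ` Fam n d (u0 n d u)) \<inter> (st_Ltr ` Fam n (d - 1) (u1 n d u)))"
  then consider "\<tau> \<in> (st_Ltr ` Fam n d (u0 n d u))" | "\<tau> \<in> (st_Ltr ` Fam n (d - 1) (u1 n d u))" | "\<tau> \<in> insert (Suc n) ` ((st_Ltr ` Fam n d (u0 n d u)) \<inter> (st_Ltr ` Fam n (d - 1) (u1 n d u)))" by blast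
  then show "\<tau> \<in> (st_Ltr ` Fam (Suc n) d u)"
  proof cases
    case 1
    then obtain C where "C \<in> Fam n d (u0 n d u)" "\<tau> = st_Ltr C" by auto
    then show ?thesis using Fam_N[of C n d u] st_Ltr_snoc[of C StN] by (auto intro!: image_eqI[of _ _ "C @ [StN]"])
  next
    case 2
    then obtain C where C: "C \<in> Fam n (d - 1) (u1 n d u)" "\<tau> = st_Ltr C" by auto
    show ?thesis
    proof (cases "fst (stp C 0 0) = snd (stp C 0 0)")
      case True then show ?thesis using C Fam_E[of C n d u] st_Ltr_snoc[of C StE]
        by (auto intro!: image_eqI[of _ _ "C @ [StE]"])
    next
      case False
      then have "snd (stp C 0 0) < fst (stp C 0 0)" using stp_le[of 0 0 C] by simp
      from shiftF[OF C(1) this] obtain C'' where "C'' \<in> Fam n d (u0 n d u)" "st_Ltr C'' = st_Ltr C" by blast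
      then show ?thesis using C Fam_N[of C'' n d u] st_Ltr_snoc[of C'' StN] by (auto intro!: image_eqI[of _ _ "C'' @ [StN]"])
    qed
  next
    case 3
    then obtain C0 C1 where C: "C0 \<in> Fam n d (u0 n d u)" "C1 \<in> Fam n (d - 1) (u1 n d u)"
      "st_Ltr C0 = st_Ltr C1" "\<tau> = insert (Suc n) (st_Ltr C1)" by force
    have "snd (stp C1 0 0) < fst (stp C1 0 0)" by (rule open_pos[OF C(1-3)])
    then show ?thesis using C Fam_E[of C1 n d u] st_Ltr_snoc[of C1 StE] Fam_mem[OF C(2)]
      by (auto intro!: image_eqI[of _ _ "C1 @ [StE]"])
  qed
qed


definition slex :: "nat set \<Rightarrow> nat set \<Rightarrow> bool" where
  "slex \<rho> \<sigma> \<longleftrightarrow> (\<exists>i. i \<in> \<sigma> \<and> i \<notin> \<rho> \<and> (\<forall>j<i. j \<in> \<rho> \<longleftrightarrow> j \<in> \<sigma>))"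

lemma slex_irrefl: "\<not> slex \<sigma> \<sigma>"
  by (auto simp: slex_def)

lemma slex_trans: assumes "slex a b" "slex b c" shows "slex a c"
proof -
  obtain i1 where i1: "i1 \<in> b" "i1 \<notin> a" "\<forall>j<i1. j \<in> a \<longleftrightarrow> j \<in> b" using assms(1) by (auto simp: slex_def)
  obtain i2 where i2: "i2 \<in> c" "i2 \<notin> b" "\<forall>j<i2. j \<in> b \<longleftrightarrow> j \<in> c" using assms(2) by (auto simp: slex_def)
  consider "i1 < i2" | "i2 < i1" | "i1 = i2" by arith
  then show ?thesis
  proof cases
    case 1 then show ?thesis unfolding slex_def using i1 i2 by (intro exI[of _ i1]) auto
  next
    case 2 then show ?thesis unfolding slex_def using i1 i2 by (intro exI[of _ i2]) auto
  next
    case 3 then show ?thesis using i1 i2 by auto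
  qed
qed

lemma slex_asym: "slex a b \<Longrightarrow> \<not> slex b a"
  using slex_trans slex_irrefl by blast

lemma slex_total: assumes "\<sigma> \<noteq> \<rho>" shows "slex \<sigma> \<rho> \<or> slex \<rho> \<sigma>"
proof -
  have "\<exists>i. (i \<in> \<sigma>) \<noteq> (i \<in> \<rho>)" using assms by auto
  define i where "i = (LEAST i. (i \<in> \<sigma>) \<noteq> (i \<in> \<rho>))"
  have i: "(i \<in> \<sigma>) \<noteq> (i \<in> \<rho>)" unfolding i_def by (rule LeastI_ex) fact
  have b: "\<forall>j<i. j \<in> \<sigma> \<longleftrightarrow> j \<in> \<rho>" unfolding i_def using not_less_Least by blast
  show ?thesis using i b unfolding slex_def by (cases "i \<in> \<rho>") auto
qed

lemma slex_insert: "j \<notin> \<sigma> \<Longrightarrow> slex \<sigma> (insert j \<sigma>)"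
  unfolding slex_def by (intro exI[of _ j]) auto

lemma slex_ins_mono: assumes "slex a b" "j \<notin> b" shows "slex (insert j a) (insert j b)"
proof -
  obtain i where i: "i \<in> b" "i \<notin> a" "\<forall>j<i. j \<in> a \<longleftrightarrow> j \<in> b" using assms(1) by (auto simp: slex_def)
  have "i \<noteq> j" using i assms(2) by auto
  then show ?thesis unfolding slex_def using i by (intro exI[of _ i]) auto
qed

lemma slex_ins_anti: assumes "slex (insert m a) (insert m b)" "m \<notin> a" "m \<notin> b" shows "slex a b"
proof -
  obtain i where i: "i \<in> insert m b" "i \<notin> insert m a" "\<forall>j<i. j \<in> insert m a \<longleftrightarrow> j \<in> insert m b"
    using assms(1) by (auto simp: slex_def)
  have "\<forall>j<i. j \<in> a \<longleftrightarrow> j \<in> b" using i(3) assms(2,3) by auto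
  then show ?thesis unfolding slex_def using i by (intro exI[of _ i]) auto
qed

lemma slex_ins_left: assumes "slex (insert m \<sigma>) \<tau>" "m \<notin> \<tau>" shows "slex \<sigma> \<tau>"
proof -
  obtain i where i: "i \<in> \<tau>" "i \<notin> insert m \<sigma>" "\<forall>j<i. j \<in> insert m \<sigma> \<longleftrightarrow> j \<in> \<tau>"
    using assms(1) by (auto simp: slex_def)
  have "\<forall>j<i. j \<in> \<sigma> \<longleftrightarrow> j \<in> \<tau>" using i(3) assms(2) by auto
  then show ?thesis unfolding slex_def using i by (intro exI[of _ i]) auto
qed

lemma slex_ins_left2: assumes "slex \<rho> \<tau>" "\<forall>x\<in>\<tau>. x < m" shows "slex (insert m \<rho>) \<tau>"
proof -
  obtain i where i: "i \<in> \<tau>" "i \<notin> \<rho>" "\<forall>j<i. j \<in> \<rho> \<longleftrightarrow> j \<in> \<tau>" using assms(1) by (auto simp: slex_def)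
  have "i < m" using i assms(2) by auto
  then show ?thesis unfolding slex_def using i by (intro exI[of _ i]) auto
qed

lemma slex_ins_right: assumes "slex \<sigma> (insert m \<tau>)" "\<forall>x\<in>\<sigma>. x < m" "\<forall>x\<in>\<tau>. x < m"
  shows "\<sigma> = \<tau> \<or> slex \<sigma> \<tau>"
proof -
  obtain i where i: "i \<in> insert m \<tau>" "i \<notin> \<sigma>" "\<forall>j<i. j \<in> \<sigma> \<longleftrightarrow> j \<in> insert m \<tau>"
    using assms(1) by (auto simp: slex_def)
  show ?thesis
  proof (cases "i = m")
    case True
    then have "\<forall>j<m. j \<in> \<sigma> \<longleftrightarrow> j \<in> \<tau>" using i by auto
    then have "\<sigma> = \<tau>" using assms(2,3) by blast
    then show ?thesis by simp
  next
    case False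
    then have "i \<in> \<tau>" using i by auto
    then have "i < m" using assms(3) by auto
    then show ?thesis using i False unfolding slex_def by (intro disjI2 exI[of _ i]) auto
  qed
qed

lemma slex_ins_right2: assumes "slex \<sigma> \<tau>" "\<forall>x\<in>\<tau>. x < m" shows "slex \<sigma> (insert m \<tau>)"
proof -
  obtain i where i: "i \<in> \<tau>" "i \<notin> \<sigma>" "\<forall>j<i. j \<in> \<sigma> \<longleftrightarrow> j \<in> \<tau>" using assms(1) by (auto simp: slex_def)
  have "i < m" using i assms(2) by auto
  then show ?thesis unfolding slex_def using i by (intro exI[of _ i]) auto
qed

definition MLp :: "nat set \<Rightarrow> (nat set \<Rightarrow> real) \<Rightarrow> bool" where
  "MLp E p \<longleftrightarrow> (\<forall>\<sigma>. p \<sigma> \<noteq> 0 \<longrightarrow> \<sigma> \<subseteq> E)"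

definition ev :: "(nat set \<Rightarrow> real) \<Rightarrow> nat set \<Rightarrow> real" where
  "ev p B = (\<Sum>\<sigma>\<in>Pow B. p \<sigma>)"

definition islead :: "(nat set \<Rightarrow> real) \<Rightarrow> nat set \<Rightarrow> bool" where
  "islead p \<tau> \<longleftrightarrow> p \<tau> \<noteq> 0 \<and> (\<forall>\<sigma>. p \<sigma> \<noteq> 0 \<longrightarrow> \<sigma> = \<tau> \<or> slex \<sigma> \<tau>)"

definition KK :: "nat set \<Rightarrow> nat set set \<Rightarrow> nat set set" where
  "KK E V = {\<tau>. \<exists>p. MLp E p \<and> (\<forall>B\<in>V. ev p B = 0) \<and> islead p \<tau>}"

definition std :: "nat set \<Rightarrow> nat set set \<Rightarrow> nat set set" where
  "std E V = {\<tau>. \<tau> \<subseteq> E \<and> \<tau> \<notin> KK E V}"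

lemma ev_insert:
  assumes "finite B" "j \<notin> B"
  shows "ev p (insert j B) = ev p B + ev (\<lambda>\<sigma>. p (insert j \<sigma>)) B"
proof -
  have d: "Pow B \<inter> insert j ` Pow B = {}" using assms by auto
  have inj: "inj_on (insert j) (Pow B)" unfolding inj_on_def
  proof (intro ballI impI)
    fix x y assume "x \<in> Pow B" "y \<in> Pow B" "insert j x = insert j y"
    then show "x = y" using assms(2) by (metis PowD insert_ident subsetD)
  qed
  have "ev p (insert j B) = (\<Sum>\<sigma>\<in>Pow B \<union> insert j ` Pow B. p \<sigma>)"
    by (simp add: ev_def Pow_insert)
  also have "\<dots> = (\<Sum>\<sigma>\<in>Pow B. p \<sigma>) + (\<Sum>\<sigma>\<in>insert j ` Pow B. p \<sigma>)"
    by (rule sum.union_disjoint) (use assms d in auto)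
  also have "(\<Sum>\<sigma>\<in>insert j ` Pow B. p \<sigma>) = (\<Sum>\<sigma>\<in>Pow B. p (insert j \<sigma>))"
    by (subst sum.reindex[OF inj]) simp
  finally show ?thesis by (simp add: ev_def)
qed

lemma ev_add: "ev (\<lambda>\<sigma>. p \<sigma> + q \<sigma>) B = ev p B + ev q B"
  by (simp add: ev_def sum.distrib)

lemma ev_diff: "ev (\<lambda>\<sigma>. p \<sigma> - q \<sigma>) B = ev p B - ev q B"
  by (simp add: ev_def sum_subtractf)

lemma ev_scale: "ev (\<lambda>\<sigma>. c * p \<sigma>) B = c * ev p B"
  by (simp add: ev_def sum_distrib_left)

lemma ev_neg: "ev (\<lambda>\<sigma>. - p \<sigma>) B = - ev p B"
  by (simp add: ev_def sum_negf)

lemma ev_zero: "ev (\<lambda>\<sigma>. 0) B = 0"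
  by (simp add: ev_def)

lemma ev_cong: "(\<And>\<sigma>. \<sigma> \<subseteq> B \<Longrightarrow> p \<sigma> = q \<sigma>) \<Longrightarrow> ev p B = ev q B"
  by (simp add: ev_def)

definition comb :: "nat \<Rightarrow> (nat set \<Rightarrow> real) \<Rightarrow> (nat set \<Rightarrow> real) \<Rightarrow> nat set \<Rightarrow> real" where
  "comb m g h = (\<lambda>\<sigma>. if m \<in> \<sigma> then h (\<sigma> - {m}) else g \<sigma>)"

lemma ev_comb0: "m \<notin> B \<Longrightarrow> ev (comb m g h) B = ev g B"
  by (rule ev_cong) (auto simp: comb_def)

lemma ev_comb1: assumes "finite B" "m \<notin> B"
  shows "ev (comb m g h) (insert m B) = ev g B + ev h B"
proof -
  have "ev (comb m g h) (insert m B) = ev (comb m g h) B + ev (\<lambda>\<sigma>. comb m g h (insert m \<sigma>)) B"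
    by (rule ev_insert[OF assms])
  also have "ev (comb m g h) B = ev g B" by (rule ev_comb0[OF assms(2)])
  also have "ev (\<lambda>\<sigma>. comb m g h (insert m \<sigma>)) B = ev h B"
  proof (rule ev_cong)
    fix \<sigma> assume "\<sigma> \<subseteq> B"
    then have "m \<notin> \<sigma>" using assms(2) by auto
    then show "comb m g h (insert m \<sigma>) = h \<sigma>" by (simp add: comb_def)
  qed
  finally show ?thesis .
qed


definition gp :: "nat \<Rightarrow> (nat set \<Rightarrow> real) \<Rightarrow> nat set \<Rightarrow> real" where
  "gp m p = (\<lambda>\<sigma>. if m \<in> \<sigma> then 0 else p \<sigma>)"
definition hp :: "nat \<Rightarrow> (nat set \<Rightarrow> real) \<Rightarrow> nat set \<Rightarrow> real" where
  "hp m p = (\<lambda>\<sigma>. if m \<in> \<sigma> then 0 else p (insert m \<sigma>))"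

definition V0 :: "nat \<Rightarrow> nat set set \<Rightarrow> nat set set" where
  "V0 m V = {B \<in> V. m \<notin> B}"
definition V1 :: "nat \<Rightarrow> nat set set \<Rightarrow> nat set set" where
  "V1 m V = (\<lambda>B. B - {m}) ` {B \<in> V. m \<in> B}"

lemma split_ev0: "m \<notin> B \<Longrightarrow> ev p B = ev (gp m p) B"
  by (rule ev_cong) (auto simp: gp_def)

lemma split_ev1: assumes "finite B" "m \<notin> B"
  shows "ev p (insert m B) = ev (gp m p) B + ev (hp m p) B"
proof -
  have "ev p (insert m B) = ev p B + ev (\<lambda>\<sigma>. p (insert m \<sigma>)) B" by (rule ev_insert[OF assms])
  also have "ev p B = ev (gp m p) B" by (rule split_ev0[OF assms(2)])
  also have "ev (\<lambda>\<sigma>. p (insert m \<sigma>)) B = ev (hp m p) B"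
    by (rule ev_cong) (use assms in \<open>auto simp: hp_def\<close>)
  finally show ?thesis .
qed

lemma MLp_gp: "MLp (insert m E') p \<Longrightarrow> MLp E' (gp m p)"
  by (auto simp: MLp_def gp_def split: if_splits)

lemma MLp_hp: "MLp (insert m E') p \<Longrightarrow> MLp E' (hp m p)"
  unfolding MLp_def hp_def by (metis insert_subset subset_insert)

lemma MLp_comb: "MLp E' g \<Longrightarrow> MLp E' h \<Longrightarrow> MLp (insert m E') (comb m g h)"
  unfolding MLp_def comb_def by (metis Diff_subset_conv insert_is_Un subset_insertI2)

lemma MLp_add: assumes "MLp E g" "MLp E h" shows "MLp E (\<lambda>\<sigma>. g \<sigma> + h \<sigma>)"
  unfolding MLp_def
proof (intro allI impI)
  fix \<sigma> assume "g \<sigma> + h \<sigma> \<noteq> 0"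
  then have "g \<sigma> \<noteq> 0 \<or> h \<sigma> \<noteq> 0" by auto
  then show "\<sigma> \<subseteq> E" using assms by (auto simp: MLp_def)
qed

lemma van_split:
  assumes VE: "V \<subseteq> Pow (insert m E')" and fin: "finite E'" and van: "\<forall>B\<in>V. ev p B = 0"
  shows "\<forall>B\<in>V0 m V. ev (gp m p) B = 0" "\<forall>B\<in>V1 m V. ev (\<lambda>\<sigma>. gp m p \<sigma> + hp m p \<sigma>) B = 0"
proof -
  show "\<forall>B\<in>V0 m V. ev (gp m p) B = 0"
  proof
    fix B assume "B \<in> V0 m V"
    then have "B \<in> V" "m \<notin> B" by (auto simp: V0_def)
    then show "ev (gp m p) B = 0" using van split_ev0[of m B p] by simp
  qed
  show "\<forall>B\<in>V1 m V. ev (\<lambda>\<sigma>. gp m p \<sigma> + hp m p \<sigma>) B = 0"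
  proof
    fix B' assume "B' \<in> V1 m V"
    then obtain B where B: "B \<in> V" "m \<in> B" "B' = B - {m}" by (auto simp: V1_def)
    have fB: "finite B'" using B VE fin by (auto intro: finite_subset)
    have mB: "m \<notin> B'" using B by auto
    have BB: "B = insert m B'" using B by auto
    have "ev p (insert m B') = ev (gp m p) B' + ev (hp m p) B'" by (rule split_ev1[OF fB mB])
    then have "ev p B = ev (gp m p) B' + ev (hp m p) B'" using BB by simp
    then show "ev (\<lambda>\<sigma>. gp m p \<sigma> + hp m p \<sigma>) B' = 0" using van B by (simp add: ev_add)
  qed
qed

lemma van_comb:
  assumes VE: "V \<subseteq> Pow (insert m E')" and fin: "finite E'"
    and v0: "\<forall>B\<in>V0 m V. ev g B = 0" and v1: "\<forall>B\<in>V1 m V. ev g B + ev h B = 0"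
  shows "\<forall>B\<in>V. ev (comb m g h) B = 0"
proof
  fix B assume B: "B \<in> V"
  show "ev (comb m g h) B = 0"
  proof (cases "m \<in> B")
    case False
    have "B \<in> V0 m V" using B False by (simp add: V0_def)
    then have "ev g B = 0" using v0 by blast
    then show ?thesis using ev_comb0[OF False, of g h] by simp
  next
    case True
    define B' where "B' = B - {m}"
    have fB: "finite B'" using B VE fin by (auto simp: B'_def intro: finite_subset)
    have "B' \<in> V1 m V" using B True by (auto simp: V1_def B'_def)
    then have z: "ev g B' + ev h B' = 0" using v1 by blast
    have mB: "m \<notin> B'" by (simp add: B'_def)
    have BB: "B = insert m B'" using True by (auto simp: B'_def)
    have "ev (comb m g h) (insert m B') = ev g B' + ev h B'" by (rule ev_comb1[OF fB mB])
    then show ?thesis using BB z by simp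
  qed
qed

lemma KK_sub: "\<tau> \<in> KK E V \<Longrightarrow> \<tau> \<subseteq> E"
  by (auto simp: KK_def MLp_def islead_def)

lemma R1:
  assumes VE: "V \<subseteq> Pow (insert m E')" and fin: "finite E'" and mE: "m \<notin> E'" and lt: "\<forall>x\<in>E'. x < m"
    and tE: "\<tau> \<subseteq> E'"
  shows "\<tau> \<in> KK (insert m E') V \<longleftrightarrow> \<tau> \<in> KK E' (V0 m V) \<and> \<tau> \<in> KK E' (V1 m V)"
proof
  have mt: "m \<notin> \<tau>" using tE mE by auto
  assume "\<tau> \<in> KK (insert m E') V"
  then obtain p where p: "MLp (insert m E') p" "\<forall>B\<in>V. ev p B = 0" "islead p \<tau>" by (auto simp: KK_def)
  have "islead (gp m p) \<tau>" using p(3) mt by (auto simp: islead_def gp_def)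
  then have A: "\<tau> \<in> KK E' (V0 m V)" using MLp_gp[OF p(1)] van_split(1)[OF VE fin p(2)] by (auto simp: KK_def)
  have h\<tau>: "hp m p \<tau> = 0"
  proof (rule ccontr)
    assume "hp m p \<tau> \<noteq> 0"
    then have "p (insert m \<tau>) \<noteq> 0" using mt by (simp add: hp_def)
    then have "insert m \<tau> = \<tau> \<or> slex (insert m \<tau>) \<tau>" using p(3) by (auto simp: islead_def)
    then show False using mt slex_ins_left[of m \<tau> \<tau>] slex_irrefl by auto
  qed
  have "islead (\<lambda>\<sigma>. gp m p \<sigma> + hp m p \<sigma>) \<tau>"
    unfolding islead_def
  proof (intro conjI allI impI)
    show "gp m p \<tau> + hp m p \<tau> \<noteq> 0" using h\<tau> p(3) mt by (simp add: gp_def islead_def)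
  next
    fix \<sigma> assume "gp m p \<sigma> + hp m p \<sigma> \<noteq> 0"
    then consider "gp m p \<sigma> \<noteq> 0" | "hp m p \<sigma> \<noteq> 0" by fastforce
    then show "\<sigma> = \<tau> \<or> slex \<sigma> \<tau>"
    proof cases
      case 1 then show ?thesis using p(3) by (auto simp: gp_def islead_def split: if_splits)
    next
      case 2
      then have "m \<notin> \<sigma>" "p (insert m \<sigma>) \<noteq> 0" by (auto simp: hp_def split: if_splits)
      then have "insert m \<sigma> = \<tau> \<or> slex (insert m \<sigma>) \<tau>" using p(3) by (auto simp: islead_def)
      then show ?thesis using mt slex_ins_left by blast
    qed
  qed
  moreover have "MLp E' (\<lambda>\<sigma>. gp m p \<sigma> + hp m p \<sigma>)"
    using MLp_gp[OF p(1)] MLp_hp[OF p(1)] by (rule MLp_add)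
  ultimately have B: "\<tau> \<in> KK E' (V1 m V)" using van_split(2)[OF VE fin p(2)] by (auto simp: KK_def)
  show "\<tau> \<in> KK E' (V0 m V) \<and> \<tau> \<in> KK E' (V1 m V)" using A B by simp
next
  have mt: "m \<notin> \<tau>" using tE mE by auto
  have tlt: "\<forall>x\<in>\<tau>. x < m" using tE lt by auto
  assume "\<tau> \<in> KK E' (V0 m V) \<and> \<tau> \<in> KK E' (V1 m V)"
  then obtain g0 g1 where g0: "MLp E' g0" "\<forall>B\<in>V0 m V. ev g0 B = 0" "islead g0 \<tau>"
    and g1: "MLp E' g1" "\<forall>B\<in>V1 m V. ev g1 B = 0" "islead g1 \<tau>" by (auto simp: KK_def)
  define c where "c = g0 \<tau> / g1 \<tau>"
  define h where "h = (\<lambda>\<sigma>. c * g1 \<sigma> - g0 \<sigma>)"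
  have g1t: "g1 \<tau> \<noteq> 0" using g1(3) by (simp add: islead_def)
  have ht: "h \<tau> = 0" using g1t by (simp add: h_def c_def)
  have MLh: "MLp E' h"
    unfolding MLp_def
  proof (intro allI impI)
    fix \<sigma> assume "h \<sigma> \<noteq> 0"
    then have "g1 \<sigma> \<noteq> 0 \<or> g0 \<sigma> \<noteq> 0" by (auto simp: h_def)
    then show "\<sigma> \<subseteq> E'" using g0(1) g1(1) by (auto simp: MLp_def)
  qed
  have v1: "\<forall>B\<in>V1 m V. ev g0 B + ev h B = 0"
    using g1(2) by (simp add: h_def ev_diff ev_scale)
  have "islead (comb m g0 h) \<tau>"
    unfolding islead_def
  proof (intro conjI allI impI)
    show "comb m g0 h \<tau> \<noteq> 0" using g0(3) mt by (simp add: comb_def islead_def)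
  next
    fix \<sigma> assume s: "comb m g0 h \<sigma> \<noteq> 0"
    show "\<sigma> = \<tau> \<or> slex \<sigma> \<tau>"
    proof (cases "m \<in> \<sigma>")
      case False then show ?thesis using s g0(3) by (auto simp: comb_def islead_def)
    next
      case True
      then have hs: "h (\<sigma> - {m}) \<noteq> 0" using s by (simp add: comb_def)
      then have "g1 (\<sigma> - {m}) \<noteq> 0 \<or> g0 (\<sigma> - {m}) \<noteq> 0" by (auto simp: h_def)
      then have "\<sigma> - {m} = \<tau> \<or> slex (\<sigma> - {m}) \<tau>" using g0(3) g1(3) by (auto simp: islead_def)
      then have "slex (\<sigma> - {m}) \<tau>" using hs ht by auto
      then have "slex (insert m (\<sigma> - {m})) \<tau>" using slex_ins_left2 tlt by blast
      then show ?thesis using True by (simp add: insert_absorb)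
    qed
  qed
  then show "\<tau> \<in> KK (insert m E') V"
    using MLp_comb[OF g0(1) MLh] van_comb[OF VE fin g0(2) v1] by (auto simp: KK_def)
qed

lemma R2:
  assumes VE: "V \<subseteq> Pow (insert m E')" and fin: "finite E'" and mE: "m \<notin> E'" and lt: "\<forall>x\<in>E'. x < m"
    and tE: "\<tau> \<subseteq> E'"
  shows "insert m \<tau> \<in> KK (insert m E') V \<longleftrightarrow> \<tau> \<in> KK E' (V0 m V) \<or> \<tau> \<in> KK E' (V1 m V)"
proof
  have mt: "m \<notin> \<tau>" using tE mE by auto
  have tlt: "\<forall>x\<in>\<tau>. x < m" using tE lt by auto
  assume "insert m \<tau> \<in> KK (insert m E') V"
  then obtain p where p: "MLp (insert m E') p" "\<forall>B\<in>V. ev p B = 0" "islead p (insert m \<tau>)" by (auto simp: KK_def)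
  have hl: "islead (hp m p) \<tau>"
    unfolding islead_def
  proof (intro conjI allI impI)
    show "hp m p \<tau> \<noteq> 0" using p(3) mt by (simp add: hp_def islead_def)
  next
    fix \<sigma> assume "hp m p \<sigma> \<noteq> 0"
    then have "m \<notin> \<sigma>" "p (insert m \<sigma>) \<noteq> 0" by (auto simp: hp_def split: if_splits)
    then have "insert m \<sigma> = insert m \<tau> \<or> slex (insert m \<sigma>) (insert m \<tau>)" using p(3) by (auto simp: islead_def)
    then show "\<sigma> = \<tau> \<or> slex \<sigma> \<tau>" using \<open>m \<notin> \<sigma>\<close> mt slex_ins_anti
      by (metis insert_ident)
  qed
  have gl: "gp m p \<sigma> \<noteq> 0 \<Longrightarrow> \<sigma> = \<tau> \<or> slex \<sigma> \<tau>" for \<sigma>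
  proof -
    assume "gp m p \<sigma> \<noteq> 0"
    then have ms: "m \<notin> \<sigma>" and ps: "p \<sigma> \<noteq> 0" by (auto simp: gp_def split: if_splits)
    then have "\<sigma> \<subseteq> insert m E'" using p(1) by (auto simp: MLp_def)
    then have slt: "\<forall>x\<in>\<sigma>. x < m" using ms lt by auto
    have "\<sigma> = insert m \<tau> \<or> slex \<sigma> (insert m \<tau>)" using p(3) ps by (auto simp: islead_def)
    then show "\<sigma> = \<tau> \<or> slex \<sigma> \<tau>" using ms slex_ins_right[OF _ slt tlt] by auto
  qed
  show "\<tau> \<in> KK E' (V0 m V) \<or> \<tau> \<in> KK E' (V1 m V)"
  proof (cases "gp m p \<tau> = 0")
    case False
    then have "islead (gp m p) \<tau>" using gl by (auto simp: islead_def)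
    then show ?thesis using MLp_gp[OF p(1)] van_split(1)[OF VE fin p(2)] by (auto simp: KK_def)
  next
    case True
    have "islead (\<lambda>\<sigma>. gp m p \<sigma> + hp m p \<sigma>) \<tau>"
      unfolding islead_def
    proof (intro conjI allI impI)
      show "gp m p \<tau> + hp m p \<tau> \<noteq> 0" using True hl by (simp add: islead_def)
    next
      fix \<sigma> assume "gp m p \<sigma> + hp m p \<sigma> \<noteq> 0"
      then consider "gp m p \<sigma> \<noteq> 0" | "hp m p \<sigma> \<noteq> 0" by fastforce
      then show "\<sigma> = \<tau> \<or> slex \<sigma> \<tau>"
        using gl hl by (cases; auto simp: islead_def)
    qed
    moreover have "MLp E' (\<lambda>\<sigma>. gp m p \<sigma> + hp m p \<sigma>)"
      using MLp_gp[OF p(1)] MLp_hp[OF p(1)] by (rule MLp_add)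
    ultimately show ?thesis using van_split(2)[OF VE fin p(2)] by (auto simp: KK_def)
  qed
next
  have mt: "m \<notin> \<tau>" using tE mE by auto
  have tlt: "\<forall>x\<in>\<tau>. x < m" using tE lt by auto
  assume "\<tau> \<in> KK E' (V0 m V) \<or> \<tau> \<in> KK E' (V1 m V)"
  then show "insert m \<tau> \<in> KK (insert m E') V"
  proof
    assume "\<tau> \<in> KK E' (V0 m V)"
    then obtain g0 where g0: "MLp E' g0" "\<forall>B\<in>V0 m V. ev g0 B = 0" "islead g0 \<tau>" by (auto simp: KK_def)
    have MLh: "MLp E' (\<lambda>\<sigma>. - g0 \<sigma>)" using g0(1) by (auto simp: MLp_def)
    have v1: "\<forall>B\<in>V1 m V. ev g0 B + ev (\<lambda>\<sigma>. - g0 \<sigma>) B = 0" by (simp add: ev_neg)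
    have "islead (comb m g0 (\<lambda>\<sigma>. - g0 \<sigma>)) (insert m \<tau>)"
      unfolding islead_def
    proof (intro conjI allI impI)
      show "comb m g0 (\<lambda>\<sigma>. - g0 \<sigma>) (insert m \<tau>) \<noteq> 0" using g0(3) mt by (simp add: comb_def islead_def)
    next
      fix \<sigma> assume s: "comb m g0 (\<lambda>\<sigma>. - g0 \<sigma>) \<sigma> \<noteq> 0"
      show "\<sigma> = insert m \<tau> \<or> slex \<sigma> (insert m \<tau>)"
      proof (cases "m \<in> \<sigma>")
        case False
        then have "g0 \<sigma> \<noteq> 0" using s by (simp add: comb_def)
        then have "\<sigma> = \<tau> \<or> slex \<sigma> \<tau>" using g0(3) by (auto simp: islead_def)
        then show ?thesis using slex_insert[OF mt] slex_ins_right2[OF _ tlt] by auto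
      next
        case True
        then have "g0 (\<sigma> - {m}) \<noteq> 0" using s by (simp add: comb_def)
        then have "\<sigma> - {m} = \<tau> \<or> slex (\<sigma> - {m}) \<tau>" using g0(3) by (auto simp: islead_def)
        then have "insert m (\<sigma> - {m}) = insert m \<tau> \<or> slex (insert m (\<sigma> - {m})) (insert m \<tau>)"
          using slex_ins_mono[OF _ mt, of "\<sigma> - {m}"] by blast
        then show ?thesis using True by (simp add: insert_absorb)
      qed
    qed
    then show ?thesis using MLp_comb[OF g0(1) MLh] van_comb[OF VE fin g0(2) v1] by (auto simp: KK_def)
  next
    assume "\<tau> \<in> KK E' (V1 m V)"
    then obtain g1 where g1: "MLp E' g1" "\<forall>B\<in>V1 m V. ev g1 B = 0" "islead g1 \<tau>" by (auto simp: KK_def)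
    have ML0: "MLp E' (\<lambda>\<sigma>. 0)" by (simp add: MLp_def)
    have v0: "\<forall>B\<in>V0 m V. ev (\<lambda>\<sigma>. 0) B = 0" by (simp add: ev_zero)
    have v1: "\<forall>B\<in>V1 m V. ev (\<lambda>\<sigma>. 0) B + ev g1 B = 0" using g1(2) by (simp add: ev_zero)
    have "islead (comb m (\<lambda>\<sigma>. 0) g1) (insert m \<tau>)"
      unfolding islead_def
    proof (intro conjI allI impI)
      show "comb m (\<lambda>\<sigma>. 0) g1 (insert m \<tau>) \<noteq> 0" using g1(3) mt by (simp add: comb_def islead_def)
    next
      fix \<sigma> assume s: "comb m (\<lambda>\<sigma>. 0) g1 \<sigma> \<noteq> 0"
      then have True: "m \<in> \<sigma>" by (simp add: comb_def split: if_splits)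
      then have "g1 (\<sigma> - {m}) \<noteq> 0" using s by (simp add: comb_def)
      then have "\<sigma> - {m} = \<tau> \<or> slex (\<sigma> - {m}) \<tau>" using g1(3) by (auto simp: islead_def)
      then have "insert m (\<sigma> - {m}) = insert m \<tau> \<or> slex (insert m (\<sigma> - {m})) (insert m \<tau>)"
        using slex_ins_mono[OF _ mt, of "\<sigma> - {m}"] by blast
      then show "\<sigma> = insert m \<tau> \<or> slex \<sigma> (insert m \<tau>)" using True by (simp add: insert_absorb)
    qed
    then show ?thesis using MLp_comb[OF ML0 g1(1)] van_comb[OF VE fin v0 v1] by (auto simp: KK_def)
  qed
qed

lemma std_rec:
  assumes VE: "V \<subseteq> Pow (insert m E')" and fin: "finite E'" and mE: "m \<notin> E'" and lt: "\<forall>x\<in>E'. x < m"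
  shows "std (insert m E') V = std E' (V0 m V) \<union> std E' (V1 m V) \<union>
           insert m ` (std E' (V0 m V) \<inter> std E' (V1 m V))"
proof (intro equalityI subsetI)
  fix \<tau> assume t: "\<tau> \<in> std (insert m E') V"
  show "\<tau> \<in> std E' (V0 m V) \<union> std E' (V1 m V) \<union> insert m ` (std E' (V0 m V) \<inter> std E' (V1 m V))"
  proof (cases "m \<in> \<tau>")
    case False
    then have tE: "\<tau> \<subseteq> E'" using t by (auto simp: std_def)
    then show ?thesis using t R1[OF VE fin mE lt tE] by (auto simp: std_def)
  next
    case True
    define \<tau>' where "\<tau>' = \<tau> - {m}"
    have tE: "\<tau>' \<subseteq> E'" using t by (auto simp: std_def \<tau>'_def)
    have "\<tau> = insert m \<tau>'" using True by (auto simp: \<tau>'_def)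
    then show ?thesis using t R2[OF VE fin mE lt tE] tE by (auto simp: std_def)
  qed
next
  fix \<tau> assume t: "\<tau> \<in> std E' (V0 m V) \<union> std E' (V1 m V) \<union> insert m ` (std E' (V0 m V) \<inter> std E' (V1 m V))"
  then consider "\<tau> \<in> std E' (V0 m V) \<union> std E' (V1 m V)" | "\<tau> \<in> insert m ` (std E' (V0 m V) \<inter> std E' (V1 m V))"
    by blast
  then show "\<tau> \<in> std (insert m E') V"
  proof cases
    case 1
    then have tE: "\<tau> \<subseteq> E'" by (auto simp: std_def)
    then show ?thesis using 1 R1[OF VE fin mE lt tE] by (auto simp: std_def)
  next
    case 2
    then obtain \<tau>' where t': "\<tau>' \<in> std E' (V0 m V)" "\<tau>' \<in> std E' (V1 m V)" "\<tau> = insert m \<tau>'" by auto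
    then have tE: "\<tau>' \<subseteq> E'" by (auto simp: std_def)
    then show ?thesis using t' R2[OF VE fin mE lt tE] by (auto simp: std_def)
  qed
qed

lemma std_empty_ground: "V \<subseteq> {{}} \<Longrightarrow> std {} V = V"
proof -
  assume VE: "V \<subseteq> {{}}"
  show ?thesis
  proof (cases "V = {}")
    case True
    have "islead (\<lambda>\<sigma>. if \<sigma> = {} then 1 else 0) {}" by (auto simp: islead_def)
    moreover have "MLp {} (\<lambda>\<sigma>. if \<sigma> = {} then 1 else 0)" by (auto simp: MLp_def)
    ultimately have "{} \<in> KK {} V" using True by (auto simp: KK_def)
    then show ?thesis using True by (auto simp: std_def)
  next
    case False
    then have V: "V = {{}}" using VE by auto
    have "KK {} V = {}"
    proof (rule ccontr)
      assume "KK {} V \<noteq> {}"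
      then obtain \<tau> p where "islead p \<tau>" "ev p {} = 0" "MLp {} p" using V by (auto simp: KK_def)
      then show False by (auto simp: islead_def MLp_def ev_def)
    qed
    then show ?thesis using V by (auto simp: std_def)
  qed
qed


lemma Fam_len: "C \<in> Fam n d u \<Longrightarrow> length C = n"
  using Fam_mem by blast

lemma V0_Fam: "V0 (Suc n) (Epos ` Fam (Suc n) d u) = Epos ` Fam n d (u0 n d u)"
proof (intro equalityI subsetI)
  fix B assume "B \<in> V0 (Suc n) (Epos ` Fam (Suc n) d u)"
  then obtain C where C: "C \<in> Fam (Suc n) d u" "B = Epos C" "Suc n \<notin> B" by (auto simp: V0_def)
  then obtain C' x where Cx: "C = C' @ [x]" using Fam_snoc by blast
  have l: "length C' = n" using Fam_len[OF C(1)] Cx by simp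
  have "x = StN" using C Cx l Epos_E[of C'] by (cases x) auto
  then show "B \<in> Epos ` Fam n d (u0 n d u)" using C Cx Fam_N Epos_N by auto
next
  fix B assume "B \<in> Epos ` Fam n d (u0 n d u)"
  then obtain C where C: "C \<in> Fam n d (u0 n d u)" "B = Epos C" by auto
  have "Suc n \<notin> B" using C Epos_sub[of C] Fam_len[OF C(1)] by auto
  then show "B \<in> V0 (Suc n) (Epos ` Fam (Suc n) d u)"
    using C Fam_N[of C n d u] Epos_N[of C] by (auto simp: V0_def)
qed

lemma V1_Fam: "V1 (Suc n) (Epos ` Fam (Suc n) d u) = Epos ` Fam n (d - 1) (u1 n d u)"
proof (intro equalityI subsetI)
  fix B assume "B \<in> V1 (Suc n) (Epos ` Fam (Suc n) d u)"
  then obtain C where C: "C \<in> Fam (Suc n) d u" "B = Epos C - {Suc n}" "Suc n \<in> Epos C" by (auto simp: V1_def)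
  then obtain C' x where Cx: "C = C' @ [x]" using Fam_snoc by blast
  have l: "length C' = n" using Fam_len[OF C(1)] Cx by simp
  have nn: "Suc n \<notin> Epos C'" using Epos_sub[of C'] l by auto
  have "x = StE" using C Cx l Epos_N[of C'] nn by (cases x) auto
  then show "B \<in> Epos ` Fam n (d - 1) (u1 n d u)" using C Cx Fam_E Epos_E l nn by auto
next
  fix B assume "B \<in> Epos ` Fam n (d - 1) (u1 n d u)"
  then obtain C where C: "C \<in> Fam n (d - 1) (u1 n d u)" "B = Epos C" by auto
  have nn: "Suc n \<notin> B" using C Epos_sub[of C] Fam_len[OF C(1)] by auto
  have "C @ [StE] \<in> Fam (Suc n) d u" using C Fam_E by blast
  moreover have "Epos (C @ [StE]) = insert (Suc n) B" using C Epos_E[of C] Fam_len[OF C(1)] by simp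
  ultimately show "B \<in> V1 (Suc n) (Epos ` Fam (Suc n) d u)"
    unfolding V1_def using nn by (auto intro!: image_eqI[of _ _ "insert (Suc n) B"])
qed

lemma Epos_Fam_sub: "Epos ` Fam n d u \<subseteq> Pow {1..n}"
  using Epos_sub Fam_len by fastforce

lemma std_Fam: "std {1..n} (Epos ` Fam n d u) = st_Ltr ` Fam n d u"
proof (induction n arbitrary: d u)
  case 0
  have F: "C \<in> Fam 0 d u \<Longrightarrow> C = []" for C using Fam_len by blast
  have e0: "Epos [] = {}" by (simp add: Epos_def)
  have "Epos ` Fam 0 d u \<subseteq> {{}}" using F e0 by auto
  then have "std {} (Epos ` Fam 0 d u) = Epos ` Fam 0 d u" by (rule std_empty_ground)
  also have "\<dots> = st_Ltr ` Fam 0 d u"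
    by (rule image_cong[OF refl]) (metis F e0 st_Ltr_def st_aux.simps(1))
  finally show ?case by simp
next
  case (Suc n)
  have eq: "{1..Suc n} = insert (Suc n) {1..n}" by auto
  have VE: "Epos ` Fam (Suc n) d u \<subseteq> Pow (insert (Suc n) {1..n})" using Epos_Fam_sub eq by metis
  have "std {1..Suc n} (Epos ` Fam (Suc n) d u) =
     std {1..n} (V0 (Suc n) (Epos ` Fam (Suc n) d u)) \<union> std {1..n} (V1 (Suc n) (Epos ` Fam (Suc n) d u)) \<union>
     insert (Suc n) ` (std {1..n} (V0 (Suc n) (Epos ` Fam (Suc n) d u)) \<inter> std {1..n} (V1 (Suc n) (Epos ` Fam (Suc n) d u)))"
    unfolding eq by (rule std_rec[OF VE]) auto
  also have "\<dots> = st_Ltr ` Fam (Suc n) d u"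
    unfolding V0_Fam V1_Fam Suc.IH by (rule st_rec[symmetric]) auto
  finally show ?case .
qed


lemma lookup_sq: "finite \<tau> \<Longrightarrow> Poly_Mapping.lookup (sqfree_mon \<tau>) j = (if j \<in> \<tau> then 1 else 0)"
  by (simp add: sqfree_mon_def lookup_sum lookup_single when_def)

lemma keys_sq: "finite \<tau> \<Longrightarrow> Poly_Mapping.keys (sqfree_mon \<tau>) = \<tau>"
  by (auto simp: in_keys_iff lookup_sq split: if_splits)

lemma sq_inj: "finite \<sigma> \<Longrightarrow> finite \<tau> \<Longrightarrow> sqfree_mon \<sigma> = sqfree_mon \<tau> \<Longrightarrow> \<sigma> = \<tau>"
  by (metis keys_sq)

lemma lex_less_irrefl: "\<not> lex_less a a"
  by (auto simp: lex_less_def)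

lemma lex_less_trans: assumes "lex_less a b" "lex_less b c" shows "lex_less a c"
proof -
  obtain i1 where i1: "\<forall>j<i1. Poly_Mapping.lookup a j = Poly_Mapping.lookup b j" "Poly_Mapping.lookup a i1 < Poly_Mapping.lookup b i1"
    using assms(1) by (auto simp: lex_less_def)
  obtain i2 where i2: "\<forall>j<i2. Poly_Mapping.lookup b j = Poly_Mapping.lookup c j" "Poly_Mapping.lookup b i2 < Poly_Mapping.lookup c i2"
    using assms(2) by (auto simp: lex_less_def)
  consider "i1 < i2" | "i2 < i1" | "i1 = i2" by arith
  then show ?thesis
  proof cases
    case 1 then show ?thesis unfolding lex_less_def using i1 i2 by (intro exI[of _ i1]) auto
  next
    case 2 then show ?thesis unfolding lex_less_def using i1 i2 by (intro exI[of _ i2]) auto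
  next
    case 3 then show ?thesis unfolding lex_less_def using i1 i2 by (intro exI[of _ i1]) auto
  qed
qed

lemma lex_less_asym: "lex_less a b \<Longrightarrow> \<not> lex_less b a"
  using lex_less_trans lex_less_irrefl by blast

lemma lex_less_total: assumes "a \<noteq> b" shows "lex_less a b \<or> lex_less b a"
proof -
  have "\<exists>i. Poly_Mapping.lookup a i \<noteq> Poly_Mapping.lookup b i"
    using assms by (metis poly_mapping_eqI)
  define i where "i = (LEAST i. Poly_Mapping.lookup a i \<noteq> Poly_Mapping.lookup b i)"
  have i: "Poly_Mapping.lookup a i \<noteq> Poly_Mapping.lookup b i" unfolding i_def by (rule LeastI_ex) fact
  have b: "\<forall>j<i. Poly_Mapping.lookup a j = Poly_Mapping.lookup b j" unfolding i_def using not_less_Least by blast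
  show ?thesis using i b unfolding lex_less_def
    by (cases "Poly_Mapping.lookup a i < Poly_Mapping.lookup b i") (auto intro!: exI[of _ i])
qed

lemma lex_less_pointwise:
  assumes "\<forall>i. Poly_Mapping.lookup a i \<le> Poly_Mapping.lookup b i" "a \<noteq> b"
  shows "lex_less a b"
proof -
  have "\<exists>i. Poly_Mapping.lookup a i \<noteq> Poly_Mapping.lookup b i"
    using assms by (metis poly_mapping_eqI)
  define i where "i = (LEAST i. Poly_Mapping.lookup a i \<noteq> Poly_Mapping.lookup b i)"
  have i: "Poly_Mapping.lookup a i \<noteq> Poly_Mapping.lookup b i" unfolding i_def by (rule LeastI_ex) fact
  have b: "\<forall>j<i. Poly_Mapping.lookup a j = Poly_Mapping.lookup b j" unfolding i_def using not_less_Least by blast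
  show ?thesis using i b assms(1) unfolding lex_less_def
    by (intro exI[of _ i]) (metis le_neq_implies_less)
qed

lemma lex_less_mono_right:
  assumes "lex_less a b" "\<forall>i. Poly_Mapping.lookup b i \<le> Poly_Mapping.lookup c i"
  shows "lex_less a c"
  using assms lex_less_pointwise lex_less_trans by metis

lemma lex_sq: assumes "finite \<sigma>" "finite \<tau>"
  shows "lex_less (sqfree_mon \<sigma>) (sqfree_mon \<tau>) \<longleftrightarrow> slex \<sigma> \<tau>"
  unfolding lex_less_def slex_def using assms
  by (simp add: lookup_sq) (metis (no_types, opaque_lifting) less_numeral_extra(4) one_neq_zero zero_less_one)

definition is_lead :: "rpoly \<Rightarrow> mon \<Rightarrow> bool" where
  "is_lead f \<alpha> \<longleftrightarrow> \<alpha> \<in> Poly_Mapping.keys f \<and> (\<forall>\<beta>\<in>Poly_Mapping.keys f. \<beta> = \<alpha> \<or> lex_less \<beta> \<alpha>)"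

lemma is_lead_unique: assumes A: "is_lead f a" and B: "is_lead f b" shows "a = b"
proof -
  have 1: "b = a \<or> lex_less b a" using A B unfolding is_lead_def by blast
  have 2: "a = b \<or> lex_less a b" using A B unfolding is_lead_def by blast
  show ?thesis using 1 2 lex_less_asym by blast
qed

lemma is_lead_lead_mon: assumes "is_lead f a" shows "lead_mon f = a"
proof -
  have "(THE \<alpha>. is_lead f \<alpha>) = a" by (rule the_equality) (use assms is_lead_unique in auto)
  moreover have "lead_mon f = (THE \<alpha>. is_lead f \<alpha>)" by (simp add: lead_mon_def is_lead_def)
  ultimately show ?thesis by simp
qed

lemma max_exists: "finite S \<Longrightarrow> S \<noteq> {} \<Longrightarrow> \<exists>\<alpha>\<in>S. \<forall>\<beta>\<in>S. \<beta> = \<alpha> \<or> lex_less \<beta> \<alpha>"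
proof (induction S rule: finite_ne_induct)
  case (singleton x) then show ?case by simp
next
  case (insert x F)
  then obtain a where a: "a \<in> F" "\<forall>\<beta>\<in>F. \<beta> = a \<or> lex_less \<beta> a" by blast
  show ?case
  proof (cases "lex_less x a")
    case True then show ?thesis using a by auto
  next
    case False
    then have "x = a \<or> lex_less a x" using lex_less_total by blast
    then show ?thesis using a lex_less_trans by (intro bexI[of _ x]) auto
  qed
qed

lemma lead_mon_prop: "f \<noteq> 0 \<Longrightarrow> is_lead f (lead_mon f)"
proof -
  assume "f \<noteq> 0"
  then have "Poly_Mapping.keys f \<noteq> {}" by simp
  then obtain a where "is_lead f a" using max_exists[of "Poly_Mapping.keys f"] by (auto simp: is_lead_def)
  then show ?thesis using is_lead_lead_mon by simp
qed


lemma prod01: "finite S \<Longrightarrow> (\<forall>i\<in>S. 0 < k i) \<Longrightarrow>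
   (\<Prod>i\<in>S. (if i \<in> B then 1 else 0::real) ^ k i) = (if S \<subseteq> B then 1 else 0)"
proof (induction S rule: finite_induct)
  case empty then show ?case by simp
next
  case (insert x F) then show ?case by auto
qed

lemma peval_char: "peval f (char_vec B) =
   (\<Sum>\<beta>\<in>Poly_Mapping.keys f. if Poly_Mapping.keys \<beta> \<subseteq> B then Poly_Mapping.lookup f \<beta> else 0)"
  unfolding peval_def
proof (rule sum.cong[OF refl])
  fix \<beta> assume "\<beta> \<in> Poly_Mapping.keys f"
  have "(\<Prod>i\<in>Poly_Mapping.keys \<beta>. char_vec B i ^ Poly_Mapping.lookup \<beta> i) = (if Poly_Mapping.keys \<beta> \<subseteq> B then 1 else 0)"
    unfolding char_vec_def by (rule prod01) (auto simp: in_keys_iff)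
  then show "Poly_Mapping.lookup f \<beta> * (\<Prod>i\<in>Poly_Mapping.keys \<beta>. char_vec B i ^ Poly_Mapping.lookup \<beta> i) =
     (if Poly_Mapping.keys \<beta> \<subseteq> B then Poly_Mapping.lookup f \<beta> else 0)" by simp
qed

definition poly_of :: "nat set \<Rightarrow> (nat set \<Rightarrow> real) \<Rightarrow> rpoly" where
  "poly_of E p = (\<Sum>\<sigma>\<in>Pow E. Poly_Mapping.single (sqfree_mon \<sigma>) (p \<sigma>))"

lemma lookup_poly_of: "Poly_Mapping.lookup (poly_of E p) \<alpha> = (\<Sum>\<sigma>\<in>Pow E. if sqfree_mon \<sigma> = \<alpha> then p \<sigma> else 0)"
  by (simp add: poly_of_def lookup_sum lookup_single when_def)

lemma lookup_poly_of_sq: assumes "finite E" "\<sigma> \<subseteq> E"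
  shows "Poly_Mapping.lookup (poly_of E p) (sqfree_mon \<sigma>) = p \<sigma>"
proof -
  have "(\<Sum>\<sigma>'\<in>Pow E. if sqfree_mon \<sigma>' = sqfree_mon \<sigma> then p \<sigma>' else 0) = (\<Sum>\<sigma>'\<in>Pow E. if \<sigma>' = \<sigma> then p \<sigma>' else 0)"
  proof (rule sum.cong[OF refl])
    fix \<sigma>' assume "\<sigma>' \<in> Pow E"
    then have "finite \<sigma>'" "finite \<sigma>" using assms finite_subset by auto
    then show "(if sqfree_mon \<sigma>' = sqfree_mon \<sigma> then p \<sigma>' else 0) = (if \<sigma>' = \<sigma> then p \<sigma>' else 0)"
      using sq_inj by auto
  qed
  also have "\<dots> = p \<sigma>" using assms by (simp add: sum.delta)
  finally show ?thesis by (simp add: lookup_poly_of)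
qed

lemma lookup_poly_of_out: "\<alpha> \<notin> sqfree_mon ` Pow E \<Longrightarrow> Poly_Mapping.lookup (poly_of E p) \<alpha> = 0"
  by (auto simp: lookup_poly_of intro!: sum.neutral)

lemma keys_poly_of: "Poly_Mapping.keys (poly_of E p) \<subseteq> sqfree_mon ` Pow E"
proof
  fix x assume "x \<in> Poly_Mapping.keys (poly_of E p)"
  then have "Poly_Mapping.lookup (poly_of E p) x \<noteq> 0" by (simp add: in_keys_iff)
  then show "x \<in> sqfree_mon ` Pow E" using lookup_poly_of_out by blast
qed

lemma sq_inj_on: "finite E \<Longrightarrow> inj_on sqfree_mon (Pow E)"
  unfolding inj_on_def using sq_inj finite_subset by (metis PowD)

lemma peval_poly_of:
  assumes "finite E" "B \<subseteq> E" "MLp E p"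
  shows "peval (poly_of E p) (char_vec B) = ev p B"
proof -
  let ?f = "poly_of E p"
  let ?g = "\<lambda>\<beta>. if Poly_Mapping.keys \<beta> \<subseteq> B then Poly_Mapping.lookup ?f \<beta> else 0"
  have "peval ?f (char_vec B) = (\<Sum>\<beta>\<in>Poly_Mapping.keys ?f. ?g \<beta>)" by (rule peval_char)
  also have "\<dots> = (\<Sum>\<beta>\<in>sqfree_mon ` Pow E. ?g \<beta>)"
    by (rule sum.mono_neutral_left) (use assms keys_poly_of in \<open>auto simp: in_keys_iff\<close>)
  also have "\<dots> = (\<Sum>\<sigma>\<in>Pow E. ?g (sqfree_mon \<sigma>))"
    by (rule sum.reindex[OF sq_inj_on[OF assms(1)], unfolded comp_def])
  also have "\<dots> = (\<Sum>\<sigma>\<in>Pow E. if \<sigma> \<subseteq> B then p \<sigma> else 0)"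
  proof (rule sum.cong[OF refl])
    fix \<sigma> assume s: "\<sigma> \<in> Pow E"
    then have "finite \<sigma>" using assms(1) finite_subset by auto
    then show "?g (sqfree_mon \<sigma>) = (if \<sigma> \<subseteq> B then p \<sigma> else 0)"
      using keys_sq lookup_poly_of_sq[OF assms(1)] s by auto
  qed
  also have "\<dots> = (\<Sum>\<sigma>\<in>Pow E \<inter> {\<sigma>. \<sigma> \<subseteq> B}. p \<sigma>)"
    by (simp add: sum.inter_restrict assms(1))
  also have "Pow E \<inter> {\<sigma>. \<sigma> \<subseteq> B} = Pow B" using assms by auto
  finally show ?thesis by (simp add: ev_def)
qed

lemma poly_of_in: "finite E \<Longrightarrow> poly_of E p \<in> poly_in E"
  unfolding poly_in_def
proof (intro CollectI ballI)
  assume fE: "finite E"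
  fix \<alpha> assume "\<alpha> \<in> Poly_Mapping.keys (poly_of E p)"
  then have "\<alpha> \<in> sqfree_mon ` Pow E" by (meson keys_poly_of subsetD)
  then obtain \<sigma> where s: "\<sigma> \<subseteq> E" "\<alpha> = sqfree_mon \<sigma>" by blast
  then have "finite \<sigma>" using fE finite_subset by auto
  then show "Poly_Mapping.keys \<alpha> \<subseteq> E" using s keys_sq by simp
qed

lemma KK_to_init:
  assumes finE: "finite E" and BsE: "Bs \<subseteq> Pow E" and t: "\<tau> \<in> KK E Bs"
  shows "monom (sqfree_mon \<tau>) \<in> init_ideal_lex E (vanishing_ideal E (char_vec ` Bs))"
proof -
  obtain p where p: "MLp E p" "\<forall>B\<in>Bs. ev p B = 0" "islead p \<tau>" using t by (auto simp: KK_def)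
  have tE: "\<tau> \<subseteq> E" using KK_sub[OF t] .
  let ?f = "poly_of E p"
  have fI: "?f \<in> vanishing_ideal E (char_vec ` Bs)"
    unfolding vanishing_ideal_def using poly_of_in[OF finE] peval_poly_of[OF finE _ p(1)] p(2) BsE by auto
  have lt: "Poly_Mapping.lookup ?f (sqfree_mon \<tau>) = p \<tau>" by (rule lookup_poly_of_sq[OF finE tE])
  have pt: "p \<tau> \<noteq> 0" using p(3) by (simp add: islead_def)
  have "is_lead ?f (sqfree_mon \<tau>)"
    unfolding is_lead_def
  proof
    show "sqfree_mon \<tau> \<in> Poly_Mapping.keys ?f" using lt pt by (simp add: in_keys_iff)
  next
    show "\<forall>\<beta>\<in>Poly_Mapping.keys ?f. \<beta> = sqfree_mon \<tau> \<or> lex_less \<beta> (sqfree_mon \<tau>)"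
    proof
      fix \<beta> assume b: "\<beta> \<in> Poly_Mapping.keys ?f"
      then have "\<beta> \<in> sqfree_mon ` Pow E" by (meson keys_poly_of subsetD)
  then obtain \<sigma> where s: "\<sigma> \<subseteq> E" "\<beta> = sqfree_mon \<sigma>" by blast
      have "p \<sigma> \<noteq> 0" using b s lookup_poly_of_sq[OF finE s(1)] by (simp add: in_keys_iff)
      then have "\<sigma> = \<tau> \<or> slex \<sigma> \<tau>" using p(3) by (auto simp: islead_def)
      moreover have "finite \<sigma>" "finite \<tau>" using s tE finE finite_subset by auto
      ultimately show "\<beta> = sqfree_mon \<tau> \<or> lex_less \<beta> (sqfree_mon \<tau>)" using s lex_sq by auto
    qed
  qed
  then have lm: "lead_mon ?f = sqfree_mon \<tau>" by (rule is_lead_lead_mon)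
  have fnz: "?f \<noteq> 0" using lt pt by auto
  have one: "(1::rpoly) \<in> poly_in E" by (simp add: poly_in_def)
  have "monom (lead_mon ?f) \<in> {monom (lead_mon f) | f. f \<in> vanishing_ideal E (char_vec ` Bs) \<and> f \<noteq> 0}"
    using fI fnz by blast
  from ideal_gen.add[OF this one ideal_gen.zero]
  show ?thesis unfolding init_ideal_lex_def lm by simp
qed


lemma ideal_keys:
  assumes "q \<in> ideal_gen E G" "G \<subseteq> {monom (lead_mon f) | f. f \<in> I \<and> f \<noteq> 0}"
  shows "\<beta> \<in> Poly_Mapping.keys q \<Longrightarrow> \<exists>f\<in>I. f \<noteq> 0 \<and> (\<forall>i. Poly_Mapping.lookup (lead_mon f) i \<le> Poly_Mapping.lookup \<beta> i)"
  using assms(1)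
proof (induction arbitrary: \<beta> rule: ideal_gen.induct)
  case zero then show ?case by simp
next
  case (add g h p)
  have "g \<in> {monom (lead_mon f) | f. f \<in> I \<and> f \<noteq> 0}" using assms(2) add.hyps(1) by (rule subsetD)
  then obtain f0 where f0: "f0 \<in> I" "f0 \<noteq> 0" "g = monom (lead_mon f0)" by blast
  have "\<beta> \<in> Poly_Mapping.keys (h * g) \<union> Poly_Mapping.keys p" using subsetD[OF keys_add add.prems] .
  then have "\<beta> \<in> Poly_Mapping.keys (h * g) \<or> \<beta> \<in> Poly_Mapping.keys p" by simp
  then show ?case
  proof
    assume "\<beta> \<in> Poly_Mapping.keys (h * g)"
    then obtain a b where ab: "\<beta> = a + b" "b \<in> Poly_Mapping.keys g" using keys_mult by blast
    have "b = lead_mon f0" using ab(2) f0(3) by (simp add: monom_def)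
    then show ?thesis using f0 ab(1) by (auto simp: lookup_add)
  next
    assume "\<beta> \<in> Poly_Mapping.keys p" then show ?thesis using add.IH by blast
  qed
qed

definition ml :: "rpoly \<Rightarrow> nat set \<Rightarrow> real" where
  "ml f = (\<lambda>\<sigma>. \<Sum>\<beta>\<in>{\<beta> \<in> Poly_Mapping.keys f. Poly_Mapping.keys \<beta> = \<sigma>}. Poly_Mapping.lookup f \<beta>)"

lemma ev_ml: assumes "finite B" shows "ev (ml f) B = peval f (char_vec B)"
proof -
  let ?S = "{\<beta> \<in> Poly_Mapping.keys f. Poly_Mapping.keys \<beta> \<subseteq> B}"
  have "ev (ml f) B = (\<Sum>\<sigma>\<in>Pow B. \<Sum>\<beta>\<in>{x. x \<in> ?S \<and> Poly_Mapping.keys x = \<sigma>}. Poly_Mapping.lookup f \<beta>)"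
    unfolding ev_def ml_def by (rule sum.cong[OF refl]) (rule sum.cong, auto)
  also have "\<dots> = (\<Sum>\<beta>\<in>?S. Poly_Mapping.lookup f \<beta>)"
    by (rule sum.group) (use assms in auto)
  also have "\<dots> = (\<Sum>\<beta>\<in>Poly_Mapping.keys f. if Poly_Mapping.keys \<beta> \<subseteq> B then Poly_Mapping.lookup f \<beta> else 0)"
    by (rule sum.inter_filter) simp
  also have "\<dots> = peval f (char_vec B)" by (rule peval_char[symmetric])
  finally show ?thesis .
qed

lemma ml_nz: "ml f \<sigma> \<noteq> 0 \<Longrightarrow> \<exists>\<beta>\<in>Poly_Mapping.keys f. Poly_Mapping.keys \<beta> = \<sigma>"
proof (rule ccontr)
  assume nz: "ml f \<sigma> \<noteq> 0" and "\<not> (\<exists>\<beta>\<in>Poly_Mapping.keys f. Poly_Mapping.keys \<beta> = \<sigma>)"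
  then have e: "{\<beta> \<in> Poly_Mapping.keys f. Poly_Mapping.keys \<beta> = \<sigma>} = {}" by auto
  have "ml f \<sigma> = 0" unfolding ml_def e by simp
  then show False using nz by simp
qed

lemma MLp_ml: "f \<in> poly_in E \<Longrightarrow> MLp E (ml f)"
  unfolding MLp_def poly_in_def using ml_nz by blast

definition mulx :: "nat \<Rightarrow> (nat set \<Rightarrow> real) \<Rightarrow> nat set \<Rightarrow> real" where
  "mulx j p = (\<lambda>\<rho>. if j \<in> \<rho> then p \<rho> + p (\<rho> - {j}) else 0)"

lemma ev_mulx: assumes "finite B" shows "ev (mulx j p) B = (if j \<in> B then ev p B else 0)"
proof (cases "j \<in> B")
  case False
  have "ev (mulx j p) B = ev (\<lambda>\<sigma>. 0) B"
    by (rule ev_cong) (use False in \<open>auto simp: mulx_def\<close>)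
  then show ?thesis using False by (simp add: ev_zero)
next
  case True
  define B' where "B' = B - {j}"
  have B: "B = insert j B'" "j \<notin> B'" "finite B'" using True assms by (auto simp: B'_def)
  have "ev (mulx j p) B = ev (mulx j p) B' + ev (\<lambda>\<sigma>. mulx j p (insert j \<sigma>)) B'"
    unfolding B(1) by (rule ev_insert[OF B(3,2)])
  also have "ev (mulx j p) B' = 0"
  proof -
    have "ev (mulx j p) B' = ev (\<lambda>_. 0) B'" by (rule ev_cong) (use B(2) in \<open>auto simp: mulx_def\<close>)
    then show ?thesis by (simp add: ev_zero)
  qed
  also have "ev (\<lambda>\<sigma>. mulx j p (insert j \<sigma>)) B' = ev (\<lambda>\<sigma>. p \<sigma> + p (insert j \<sigma>)) B'"
  proof (rule ev_cong)
    fix \<sigma> assume "\<sigma> \<subseteq> B'"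
    then have "j \<notin> \<sigma>" using B(2) by auto
    then show "mulx j p (insert j \<sigma>) = p \<sigma> + p (insert j \<sigma>)" by (simp add: mulx_def)
  qed
  also have "\<dots> = ev p B' + ev (\<lambda>\<sigma>. p (insert j \<sigma>)) B'" by (rule ev_add)
  also have "\<dots> = ev p B" unfolding B(1) by (rule ev_insert[OF B(3,2), symmetric])
  finally show ?thesis using True by simp
qed

lemma KK_up1:
  assumes s: "\<sigma> \<in> KK E V" and VE: "\<forall>B\<in>V. finite B" and j: "j \<in> E" "j \<notin> \<sigma>"
  shows "insert j \<sigma> \<in> KK E V"
proof -
  obtain p where p: "MLp E p" "\<forall>B\<in>V. ev p B = 0" "islead p \<sigma>" using s by (auto simp: KK_def)
  have MLq: "MLp E (mulx j p)"
    unfolding MLp_def mulx_def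
  proof (intro allI impI)
    fix \<rho> assume "(if j \<in> \<rho> then p \<rho> + p (\<rho> - {j}) else 0) \<noteq> 0"
    then have "j \<in> \<rho>" "p \<rho> \<noteq> 0 \<or> p (\<rho> - {j}) \<noteq> 0" by (auto split: if_splits)
    then show "\<rho> \<subseteq> E" using p(1) j(1) by (auto simp: MLp_def)
  qed
  have van: "\<forall>B\<in>V. ev (mulx j p) B = 0" using p(2) VE ev_mulx by simp
  have pj: "p (insert j \<sigma>) = 0"
  proof (rule ccontr)
    assume "p (insert j \<sigma>) \<noteq> 0"
    then have "insert j \<sigma> = \<sigma> \<or> slex (insert j \<sigma>) \<sigma>" using p(3) by (auto simp: islead_def)
    then show False using j(2) slex_insert[OF j(2)] slex_asym by auto
  qed
  have "islead (mulx j p) (insert j \<sigma>)"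
    unfolding islead_def
  proof (intro conjI allI impI)
    show "mulx j p (insert j \<sigma>) \<noteq> 0" using pj p(3) j(2) by (simp add: mulx_def islead_def)
  next
    fix \<rho> assume r: "mulx j p \<rho> \<noteq> 0"
    then have jr: "j \<in> \<rho>" and "p \<rho> \<noteq> 0 \<or> p (\<rho> - {j}) \<noteq> 0" by (auto simp: mulx_def split: if_splits)
    then consider "p \<rho> \<noteq> 0" | "p (\<rho> - {j}) \<noteq> 0" by blast
    then show "\<rho> = insert j \<sigma> \<or> slex \<rho> (insert j \<sigma>)"
    proof cases
      case 1
      then have "\<rho> = \<sigma> \<or> slex \<rho> \<sigma>" using p(3) by (auto simp: islead_def)
      then show ?thesis using jr j(2) slex_trans slex_insert[OF j(2)] by blast
    next
      case 2
      then have "\<rho> - {j} = \<sigma> \<or> slex (\<rho> - {j}) \<sigma>" using p(3) by (auto simp: islead_def)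
      then have "insert j (\<rho> - {j}) = insert j \<sigma> \<or> slex (insert j (\<rho> - {j})) (insert j \<sigma>)"
        using slex_ins_mono[OF _ j(2), of "\<rho> - {j}"] by blast
      then show ?thesis using jr by (simp add: insert_absorb)
    qed
  qed
  then show ?thesis using MLq van by (auto simp: KK_def)
qed

lemma KK_up:
  assumes "finite D" "\<sigma> \<in> KK E V" "\<forall>B\<in>V. finite B" "D \<subseteq> E"
  shows "\<sigma> \<union> D \<in> KK E V"
  using assms
proof (induction D rule: finite_induct)
  case empty then show ?case by simp
next
  case (insert x F)
  have IH: "\<sigma> \<union> F \<in> KK E V" using insert by simp
  show ?case
  proof (cases "x \<in> \<sigma> \<union> F")
    case True then show ?thesis using IH by (simp add: insert_absorb)
  next
    case False then show ?thesis using KK_up1[OF IH insert.prems(2), of x] insert.prems(3) by simp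
  qed
qed

lemma init_to_KK:
  assumes finE: "finite E" and BsE: "Bs \<subseteq> Pow E" and tE: "\<tau> \<subseteq> E"
    and mem: "monom (sqfree_mon \<tau>) \<in> init_ideal_lex E (vanishing_ideal E (char_vec ` Bs))"
  shows "\<tau> \<in> KK E Bs"
proof -
  let ?I = "vanishing_ideal E (char_vec ` Bs)"
  have ft: "finite \<tau>" using tE finE finite_subset by auto
  have "sqfree_mon \<tau> \<in> Poly_Mapping.keys (monom (sqfree_mon \<tau>))" by (simp add: monom_def)
  then obtain f where f: "f \<in> ?I" "f \<noteq> 0" and le: "\<forall>i. Poly_Mapping.lookup (lead_mon f) i \<le> Poly_Mapping.lookup (sqfree_mon \<tau>) i"
    using ideal_keys[OF mem[unfolded init_ideal_lex_def], of ?I] by blast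
  define \<alpha> where "\<alpha> = lead_mon f"
  have la: "is_lead f \<alpha>" using lead_mon_prop[OF f(2)] by (simp add: \<alpha>_def)
  define \<sigma> where "\<sigma> = Poly_Mapping.keys \<alpha>"
  have fs: "finite \<sigma>" by (simp add: \<sigma>_def)
  have st: "\<sigma> \<subseteq> \<tau>"
  proof
    fix i assume "i \<in> \<sigma>"
    then have "Poly_Mapping.lookup \<alpha> i \<noteq> 0" by (simp add: \<sigma>_def in_keys_iff)
    then show "i \<in> \<tau>" using le[rule_format, of i] lookup_sq[OF ft] by (auto simp: \<alpha>_def split: if_splits)
  qed
  have asq: "\<alpha> = sqfree_mon \<sigma>"
  proof (rule poly_mapping_eqI)
    fix i
    show "Poly_Mapping.lookup \<alpha> i = Poly_Mapping.lookup (sqfree_mon \<sigma>) i"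
    proof (cases "i \<in> \<sigma>")
      case True
      then have "Poly_Mapping.lookup \<alpha> i \<noteq> 0" by (simp add: \<sigma>_def in_keys_iff)
      moreover have "Poly_Mapping.lookup \<alpha> i \<le> 1" using le[rule_format, of i] lookup_sq[OF ft, of i]
        by (auto simp: \<alpha>_def split: if_splits)
      ultimately show ?thesis using True lookup_sq[OF fs] by simp
    next
      case False then show ?thesis using lookup_sq[OF fs] by (simp add: \<sigma>_def in_keys_iff)
    qed
  qed
  have fpoly: "f \<in> poly_in E" and fvan: "\<forall>B\<in>Bs. peval f (char_vec B) = 0"
    using f(1) by (auto simp: vanishing_ideal_def)
  have van: "\<forall>B\<in>Bs. ev (ml f) B = 0"
    using fvan ev_ml BsE finE finite_subset by (metis PowD subsetD)
  have single: "{\<beta> \<in> Poly_Mapping.keys f. Poly_Mapping.keys \<beta> = \<sigma>} = {\<alpha>}"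
  proof (intro equalityI subsetI)
    fix \<beta> assume b: "\<beta> \<in> {\<beta> \<in> Poly_Mapping.keys f. Poly_Mapping.keys \<beta> = \<sigma>}"
    show "\<beta> \<in> {\<alpha>}"
    proof (rule ccontr)
      assume ne: "\<beta> \<notin> {\<alpha>}"
      have "\<forall>i. Poly_Mapping.lookup \<alpha> i \<le> Poly_Mapping.lookup \<beta> i"
      proof
        fix i show "Poly_Mapping.lookup \<alpha> i \<le> Poly_Mapping.lookup \<beta> i"
          using b lookup_sq[OF fs, of i] asq by (cases "i \<in> \<sigma>") (auto simp: in_keys_iff)
      qed
      then have "lex_less \<alpha> \<beta>" using ne lex_less_pointwise by auto
      moreover have "\<beta> = \<alpha> \<or> lex_less \<beta> \<alpha>" using la b by (auto simp: is_lead_def)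
      ultimately show False using ne lex_less_asym by auto
    qed
  next
    fix \<beta> assume "\<beta> \<in> {\<alpha>}"
    then show "\<beta> \<in> {\<beta> \<in> Poly_Mapping.keys f. Poly_Mapping.keys \<beta> = \<sigma>}" using la by (auto simp: is_lead_def \<sigma>_def)
  qed
  have "islead (ml f) \<sigma>"
    unfolding islead_def
  proof (intro conjI allI impI)
    show "ml f \<sigma> \<noteq> 0" using single la by (auto simp: ml_def is_lead_def in_keys_iff)
  next
    fix \<sigma>' assume "ml f \<sigma>' \<noteq> 0"
    then obtain \<beta> where b: "\<beta> \<in> Poly_Mapping.keys f" "Poly_Mapping.keys \<beta> = \<sigma>'" using ml_nz by blast
    show "\<sigma>' = \<sigma> \<or> slex \<sigma>' \<sigma>"
    proof (rule ccontr)
      assume c: "\<not> (\<sigma>' = \<sigma> \<or> slex \<sigma>' \<sigma>)"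
      then have "slex \<sigma> \<sigma>'" using slex_total by blast
      moreover have fs': "finite \<sigma>'" using b by auto
      ultimately have "lex_less (sqfree_mon \<sigma>) (sqfree_mon \<sigma>')" using lex_sq[OF fs fs'] by simp
      moreover have "\<forall>i. Poly_Mapping.lookup (sqfree_mon \<sigma>') i \<le> Poly_Mapping.lookup \<beta> i"
      proof
        fix i show "Poly_Mapping.lookup (sqfree_mon \<sigma>') i \<le> Poly_Mapping.lookup \<beta> i"
          using b lookup_sq[OF fs', of i] by (cases "i \<in> \<sigma>'") (auto simp: in_keys_iff)
      qed
      ultimately have "lex_less \<alpha> \<beta>" using lex_less_mono_right asq by blast
      moreover have "\<beta> = \<alpha> \<or> lex_less \<beta> \<alpha>" using la b by (auto simp: is_lead_def)
      ultimately show False using lex_less_asym c b(2) \<sigma>_def by auto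
    qed
  qed
  then have "\<sigma> \<in> KK E Bs" using MLp_ml[OF fpoly] van by (auto simp: KK_def)
  have fD: "finite (\<tau> - \<sigma>)" using ft by simp
  have fB: "\<forall>B\<in>Bs. finite B" using BsE finE by (auto intro: finite_subset)
  have DE: "\<tau> - \<sigma> \<subseteq> E" using tE by auto
  from KK_up[OF fD \<open>\<sigma> \<in> KK E Bs\<close> fB DE] have "\<sigma> \<union> (\<tau> - \<sigma>) \<in> KK E Bs" .
  then show ?thesis using st by (simp add: Un_Diff_cancel2 Un_absorb1 sup_commute)
qed

lemma S_lex_std:
  assumes "finite E" "E \<noteq> {}" "Bs \<subseteq> Pow E"
  shows "S_lex E Bs = std E Bs"
  unfolding S_lex_def std_def using assms init_to_KK[OF assms(1,3)] KK_to_init[OF assms(1,3)] by auto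


lemma num_e_take_le: "num_e (take k xs) \<le> num_e xs"
  using num_e_append[of "take k xs" "drop k xs"] by simp

lemma num_e_take_le_k: "num_e (take k xs) \<le> k"
  using num_e_le[of "take k xs"] by simp

lemma num_e_card: assumes "k \<le> length C" shows "num_e (take k C) = card (Epos C \<inter> {1..k})"
proof -
  have "num_e (take k C) = card {i. i < length (take k C) \<and> take k C ! i = StE}"
    unfolding num_e_def by (rule length_filter_conv_card)
  also have "{i. i < length (take k C) \<and> take k C ! i = StE} = {i. i < k \<and> C ! i = StE}"
    using assms by auto
  also have "card \<dots> = card (Suc ` {i. i < k \<and> C ! i = StE})" by (simp add: card_image)
  also have "Suc ` {i. i < k \<and> C ! i = StE} = Epos C \<inter> {1..k}"
  proof (intro equalityI subsetI)
    fix x assume "x \<in> Suc ` {i. i < k \<and> C ! i = StE}"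
    then show "x \<in> Epos C \<inter> {1..k}" using assms by (auto simp: Epos_def)
  next
    fix x assume x: "x \<in> Epos C \<inter> {1..k}"
    then have "x = Suc (x - 1)" "x - 1 < k" "C ! (x - 1) = StE" by (auto simp: Epos_def)
    then show "x \<in> Suc ` {i. i < k \<and> C ! i = StE}" by blast
  qed
  finally show ?thesis .
qed

definition pth :: "nat \<Rightarrow> nat set \<Rightarrow> step list" where
  "pth n B = map (\<lambda>i. if Suc i \<in> B then StE else StN) [0..<n]"

lemma pth_len: "length (pth n B) = n"
  by (simp add: pth_def)

lemma Epos_pth: "Epos (pth n B) = B \<inter> {1..n}"
proof (intro equalityI subsetI)
  fix x assume "x \<in> Epos (pth n B)"
  then show "x \<in> B \<inter> {1..n}" by (auto simp: Epos_def pth_def split: if_splits)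
next
  fix x assume x: "x \<in> B \<inter> {1..n}"
  then have "x - 1 < n" "Suc (x - 1) = x" by auto
  then show "x \<in> Epos (pth n B)" using x by (auto simp: Epos_def pth_def)
qed

lemma Epos_fin: "finite (Epos C)"
  using Epos_sub finite_subset by blast

lemma matroid_Fam:
  assumes ne: "Fam n d u \<noteq> {}"
  shows "matroid {1..n} (Epos ` Fam n d u)"
  unfolding matroid_def
proof (intro conjI ballI)
  show "finite {1..n}" by simp
  show "Epos ` Fam n d u \<noteq> {}" using ne by simp
next
  fix B assume "B \<in> Epos ` Fam n d u"
  then show "B \<subseteq> {1..n}" using Epos_sub Fam_len by fastforce
next
  fix B1 B2 x assume B1: "B1 \<in> Epos ` Fam n d u" and B2: "B2 \<in> Epos ` Fam n d u" and x: "x \<in> B1 - B2"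
  obtain C1 where C1: "C1 \<in> Fam n d u" "B1 = Epos C1" using B1 by auto
  obtain C2 where C2: "C2 \<in> Fam n d u" "B2 = Epos C2" using B2 by auto
  have l1: "length C1 = n" "num_e C1 = d" using Fam_mem[OF C1(1)] by auto
  have l2: "length C2 = n" "num_e C2 = d" using Fam_mem[OF C2(1)] by auto
  have cB1: "card B1 = d" using num_e_card[of "length C1" C1] l1 C1(2) Epos_sub[of C1] by (simp add: Int_absorb2)
  have cB2: "card B2 = d" using num_e_card[of "length C2" C2] l2 C2(2) Epos_sub[of C2] by (simp add: Int_absorb2)
  have sub1: "B1 \<subseteq> {1..n}" using C1 l1 Epos_sub by metis
  have sub2: "B2 \<subseteq> {1..n}" using C2 l2 Epos_sub by metis
  have fin1: "finite B1" and fin2: "finite B2" using sub1 sub2 finite_subset by auto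
  have ne2: "B2 - B1 \<noteq> {}"
  proof
    assume "B2 - B1 = {}"
    then have "B2 \<subseteq> B1" by auto
    then have "B2 = B1" using card_subset_eq[OF fin1] cB1 cB2 by auto
    then show False using x by auto
  qed
  define y where "y = Min (B2 - B1)"
  have fd: "finite (B2 - B1)" using fin2 by simp
  have y: "y \<in> B2 - B1" unfolding y_def by (rule Min_in[OF fd ne2])
  have ymin: "\<And>z. z \<in> B2 - B1 \<Longrightarrow> y \<le> z" unfolding y_def by (rule Min_le[OF fd])
  define B' where "B' = insert y (B1 - {x})"
  have B'sub: "B' \<subseteq> {1..n}" using y sub1 sub2 by (auto simp: B'_def)
  have c0: "card B1 > 0" using x fin1 card_gt_0_iff by auto
  have cB': "card B' = d" using y x fin1 cB1 c0 by (auto simp: B'_def card_insert_if card_Diff_singleton_if)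
  define C' where "C' = pth n B'"
  have EC': "Epos C' = B'" using Epos_pth B'sub by (auto simp: C'_def)
  have lC': "length C' = n" by (simp add: C'_def pth_len)
  have "C' \<in> Fam n d u"
    unfolding Fam_def paths_def
  proof (intro CollectI conjI allI impI)
    show "length C' = n" by fact
    show "length (filter (\<lambda>s. s = StE) C') = d"
      using num_e_card[of n C'] lC' EC' B'sub cB' by (simp add: num_e_def Int_absorb2)
  next
    fix k assume k: "k \<le> n"
    have u1: "u k \<le> card (B1 \<inter> {1..k})" using C1 k l1 num_e_card[of k C1] by (auto simp: Fam_def)
    have u2: "u k \<le> card (B2 \<inter> {1..k})" using C2 k l2 num_e_card[of k C2] by (auto simp: Fam_def)
    have fk: "finite (B' \<inter> {1..k})" by simp
    have "card (B1 \<inter> {1..k}) \<le> card (B' \<inter> {1..k}) \<or> card (B2 \<inter> {1..k}) \<le> card (B' \<inter> {1..k})"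
    proof (cases "k < x")
      case True
      have "B1 \<inter> {1..k} \<subseteq> B' \<inter> {1..k}" using True by (auto simp: B'_def)
      then show ?thesis using card_mono[OF fk] by blast
    next
      case False
      show ?thesis
      proof (cases "y \<le> k")
        case True
        have eq: "B' \<inter> {1..k} = insert y ((B1 \<inter> {1..k}) - {x})" using True y sub2 by (auto simp: B'_def)
        have xin: "x \<in> B1 \<inter> {1..k}" using x False sub1 by auto
        then have "card (B1 \<inter> {1..k}) > 0" using card_gt_0_iff[of "B1 \<inter> {1..k}"] by auto
        with xin have "card (B' \<inter> {1..k}) = card (B1 \<inter> {1..k})"
          unfolding eq using y fin1 by (simp add: card_insert_if card_Diff_singleton_if)
        then show ?thesis by simp
      next
        case False
        have "B2 \<inter> {1..k} \<subseteq> B' \<inter> {1..k}"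
        proof
          fix z assume z: "z \<in> B2 \<inter> {1..k}"
          have "z \<in> B1"
          proof (rule ccontr)
            assume "z \<notin> B1"
            then have "y \<le> z" using ymin z by auto
            then show False using z False by auto
          qed
          moreover have "z \<noteq> x" using z x by auto
          ultimately show "z \<in> B' \<inter> {1..k}" using z by (auto simp: B'_def)
        qed
        then show ?thesis using card_mono[OF fk] by blast
      qed
    qed
    moreover have "num_e (take k C') = card (B' \<inter> {1..k})" using num_e_card[of k C'] k lC' EC' by simp
    ultimately show "u k \<le> num_e (take k C')" using u1 u2 by linarith
  qed
  then have "B' \<in> Epos ` Fam n d u" using EC' by blast
  then show "\<exists>y\<in>B2 - B1. insert y (B1 - {x}) \<in> Epos ` Fam n d u" using y by (auto simp: B'_def)
qed


lemma S_lex_Fam: "0 < n \<Longrightarrow> S_lex {1..n} (Epos ` Fam n d u) = st_Ltr ` Fam n d u"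
  using S_lex_std[of "{1..n}" "Epos ` Fam n d u"] Epos_Fam_sub std_Fam by auto

lemma del_V0: "B \<in> V \<Longrightarrow> m \<notin> B \<Longrightarrow> del_bases V m = V0 m V"
  by (auto simp: del_bases_def V0_def)

lemma con_V1: "B \<in> V \<Longrightarrow> m \<in> B \<Longrightarrow> con_bases V m = V1 m V"
  by (auto simp: con_bases_def V1_def)

lemma Lam_Fam:
  assumes L: "is_Lambda_family Lam"
  shows "C \<in> Fam n d u \<Longrightarrow> st_Ltr C = Lam {1..n} (Epos ` Fam n d u) (Epos C)"
proof (induction n arbitrary: d u C)
  case 0
  have C: "C = []" using Fam_len[OF 0] by simp
  have F: "Fam 0 d u = {[]}"
  proof (intro equalityI subsetI)
    fix D assume "D \<in> Fam 0 d u" then show "D \<in> {[]}" using Fam_len by fastforce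
  qed (use 0 C in auto)
  have V: "Epos ` Fam 0 d u = {{}}" unfolding F by (simp add: Epos_def)
  have mat: "matroid {1..0} (Epos ` Fam 0 d u)" using matroid_Fam 0 by blast
  then have "bij_betw (Lam {1..0} (Epos ` Fam 0 d u)) (Epos ` Fam 0 d u) (S_lex {1..0} (Epos ` Fam 0 d u))"
    using L by (auto simp: is_Lambda_family_def)
  then have "Lam {1..0} (Epos ` Fam 0 d u) {} \<in> S_lex {1..0} (Epos ` Fam 0 d u)"
    using V by (auto simp: bij_betw_def)
  then have "Lam {1..0} (Epos ` Fam 0 d u) {} = {}" by (simp add: S_lex_def)
  moreover have "Epos C = {}" using C by (simp add: Epos_def)
  moreover have "st_Ltr C = {}" using C by (simp add: st_Ltr_def)
  ultimately show ?case by simp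
next
  case (Suc n)
  let ?E = "{1..Suc n}"
  let ?F = "Fam (Suc n) d u"
  let ?V = "Epos ` ?F"
  let ?Fz = "Fam n d (u0 n d u)"
  let ?Fo = "Fam n (d - 1) (u1 n d u)"
  let ?m = "Suc n"
  have Emax: "Max ?E = ?m" by (rule Max_eqI) auto
  have Erem: "?E - {?m} = {1..n}" by auto
  have Ene: "?E \<noteq> {}" by simp
  have mat: "matroid ?E ?V" using matroid_Fam Suc.prems by blast
  have Lp: "bij_betw (Lam ?E ?V) ?V (S_lex ?E ?V)"
    "\<And>B. B \<in> ?V \<Longrightarrow> Lam ?E ?V B \<subseteq> B"
    "\<And>B. B \<in> ?V \<Longrightarrow> ?m \<notin> B \<Longrightarrow> Lam ?E ?V B = Lam {1..n} (del_bases ?V ?m) B"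
    "\<And>B. B \<in> ?V \<Longrightarrow> ?m \<in> B \<Longrightarrow> Lam ?E ?V B - {?m} = Lam {1..n} (con_bases ?V ?m) (B - {?m})"
  proof -
    have Lall: "bij_betw (Lam ?E ?V) ?V (S_lex ?E ?V) \<and> (?E \<noteq> {} \<longrightarrow> (\<forall>B\<in>?V. Lam ?E ?V B \<subseteq> B \<and>
             (Max ?E \<notin> B \<longrightarrow> Lam ?E ?V B = Lam (?E - {Max ?E}) (del_bases ?V (Max ?E)) B) \<and>
             (Max ?E \<in> B \<longrightarrow> Lam ?E ?V B - {Max ?E} =
                Lam (?E - {Max ?E}) (con_bases ?V (Max ?E)) (B - {Max ?E}))))"
      using L[unfolded is_Lambda_family_def, rule_format, OF mat] .
    then have L1: "bij_betw (Lam ?E ?V) ?V (S_lex ?E ?V)" and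
      L2: "\<forall>B\<in>?V. Lam ?E ?V B \<subseteq> B \<and>
             (?m \<notin> B \<longrightarrow> Lam ?E ?V B = Lam {1..n} (del_bases ?V ?m) B) \<and>
             (?m \<in> B \<longrightarrow> Lam ?E ?V B - {?m} = Lam {1..n} (con_bases ?V ?m) (B - {?m}))"
      using Ene unfolding Emax Erem by simp_all
    show "bij_betw (Lam ?E ?V) ?V (S_lex ?E ?V)" by (rule L1)
    show "\<And>B. B \<in> ?V \<Longrightarrow> Lam ?E ?V B \<subseteq> B" using L2 by blast
    show "\<And>B. B \<in> ?V \<Longrightarrow> ?m \<notin> B \<Longrightarrow> Lam ?E ?V B = Lam {1..n} (del_bases ?V ?m) B" using L2 by blast
    show "\<And>B. B \<in> ?V \<Longrightarrow> ?m \<in> B \<Longrightarrow> Lam ?E ?V B - {?m} = Lam {1..n} (con_bases ?V ?m) (B - {?m})"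
      using L2 by blast
  qed
  have S: "S_lex ?E ?V = st_Ltr ` ?F" by (rule S_lex_Fam) simp
  have Ncase: "Lam ?E ?V (Epos (C' @ [StN])) = st_Ltr C'" if C': "C' @ [StN] \<in> ?F" for C'
  proof -
    have C0: "C' \<in> ?Fz" using C' Fam_N by blast
    have l: "length C' = n" using Fam_len[OF C0] .
    have B: "Epos (C' @ [StN]) \<in> ?V" using C' by blast
    have mB: "?m \<notin> Epos (C' @ [StN])" using Epos_N[of C'] Epos_sub[of C'] l by auto
    have "Lam ?E ?V (Epos (C' @ [StN])) = Lam {1..n} (del_bases ?V ?m) (Epos (C' @ [StN]))"
      by (rule Lp(3)[OF B mB])
    also have "del_bases ?V ?m = Epos ` ?Fz" using del_V0[OF B mB] V0_Fam by simp
    also have "Lam {1..n} (Epos ` ?Fz) (Epos (C' @ [StN])) = st_Ltr C'"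
      using Suc.IH[OF C0] Epos_N[of C'] by simp
    finally show ?thesis .
  qed
  obtain C' x where Cx: "C = C' @ [x]" using Fam_snoc[OF Suc.prems] by blast
  show ?case
  proof (cases x)
    case StN
    then show ?thesis using Ncase Cx Suc.prems st_Ltr_snoc[of C' StN] by simp
  next
    case StE
    have CE: "C' @ [StE] \<in> ?F" using Suc.prems Cx StE by simp
    have C1: "C' \<in> ?Fo" using CE Fam_E by blast
    have l: "length C' = n" using Fam_len[OF C1] .
    have mC': "?m \<notin> Epos C'" using Epos_sub[of C'] l by auto
    have EB: "Epos C = insert ?m (Epos C')" using Cx StE Epos_E[of C'] l by simp
    have B: "Epos C \<in> ?V" using Suc.prems by blast
    have mB: "?m \<in> Epos C" using EB by simp
    have "Lam ?E ?V (Epos C) - {?m} = Lam {1..n} (con_bases ?V ?m) (Epos C - {?m})"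
      by (rule Lp(4)[OF B mB])
    also have "con_bases ?V ?m = Epos ` ?Fo" using con_V1[OF B mB] V1_Fam by simp
    also have "Epos C - {?m} = Epos C'" using EB mC' by auto
    also have "Lam {1..n} (Epos ` ?Fo) (Epos C') = st_Ltr C'" using Suc.IH[OF C1] by simp
    finally have rem: "Lam ?E ?V (Epos C) - {?m} = st_Ltr C'" .
    have inS: "Lam ?E ?V (Epos C) \<in> st_Ltr ` ?F"
    proof -
      have "Lam ?E ?V (Epos C) \<in> Lam ?E ?V ` ?V" using B by (rule imageI)
      then show ?thesis using Lp(1) S by (simp add: bij_betw_def)
    qed
    have mst: "?m \<notin> st_Ltr C'" using st_Ltr_sub[of C'] l by auto
    show ?thesis
    proof (cases "fst (stp C' 0 0) = snd (stp C' 0 0)")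
      case True
      have stC: "st_Ltr C = st_Ltr C'" using Cx StE True st_Ltr_snoc[of C' StE] by simp
      have "?m \<notin> Lam ?E ?V (Epos C)"
      proof
        assume mL: "?m \<in> Lam ?E ?V (Epos C)"
        then have eq: "Lam ?E ?V (Epos C) = insert ?m (st_Ltr C')" using rem by blast
        have rec: "st_Ltr ` ?F = st_Ltr ` ?Fz \<union> st_Ltr ` ?Fo \<union> insert ?m ` (st_Ltr ` ?Fz \<inter> st_Ltr ` ?Fo)"
          by (rule st_rec) auto
        have nm: "?m \<notin> D" if D: "D \<in> st_Ltr ` ?Fz \<union> st_Ltr ` ?Fo" for D
        proof -
          obtain C0 where C0: "C0 \<in> ?Fz \<or> C0 \<in> ?Fo" "D = st_Ltr C0" using D by blast
          then have "length C0 = n" using Fam_len by blast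
          then show ?thesis using C0(2) st_Ltr_sub[of C0] by auto
        qed
        have i1: "insert ?m (st_Ltr C') \<in> st_Ltr ` ?F" using inS eq by simp
        have i2: "insert ?m (st_Ltr C') \<notin> st_Ltr ` ?Fz \<union> st_Ltr ` ?Fo"
          using nm[of "insert ?m (st_Ltr C')"] by blast
        have "insert ?m (st_Ltr C') \<in> insert ?m ` (st_Ltr ` ?Fz \<inter> st_Ltr ` ?Fo)"
          using i1 i2 unfolding rec by blast
        then obtain \<tau> where t: "\<tau> \<in> st_Ltr ` ?Fz" "\<tau> \<in> st_Ltr ` ?Fo" "insert ?m (st_Ltr C') = insert ?m \<tau>"
          by auto
        have "?m \<notin> \<tau>" using t(1) nm by auto
        then have "\<tau> = st_Ltr C'" using t(3) mst by (metis insert_ident)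
        then obtain C0 where "C0 \<in> ?Fz" "st_Ltr C0 = st_Ltr C'" using t(1) by auto
        then have "snd (stp C' 0 0) < fst (stp C' 0 0)" using open_pos C1 by blast
        then show False using True by simp
      qed
      then show ?thesis using rem stC by simp
    next
      case False
      have stC: "st_Ltr C = insert ?m (st_Ltr C')" using Cx StE False st_Ltr_snoc[of C' StE] l by simp
      have "?m \<in> Lam ?E ?V (Epos C)"
      proof (rule ccontr)
        assume nm: "?m \<notin> Lam ?E ?V (Epos C)"
        then have eq: "Lam ?E ?V (Epos C) = st_Ltr C'" using rem by simp
        have "snd (stp C' 0 0) < fst (stp C' 0 0)" using False stp_le[of 0 0 C'] by simp
        from shiftF[OF C1 this] obtain C'' where C'': "C'' \<in> ?Fz" "st_Ltr C'' = st_Ltr C'" by blast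
        have CN: "C'' @ [StN] \<in> ?F" using C''(1) Fam_N by blast
        have B'': "Epos (C'' @ [StN]) \<in> ?V" using CN by blast
        have leq: "Lam ?E ?V (Epos (C'' @ [StN])) = Lam ?E ?V (Epos C)" using Ncase[OF CN] C''(2) eq by simp
        have inj: "inj_on (Lam ?E ?V) ?V" using Lp(1) by (simp add: bij_betw_def)
        have "Epos (C'' @ [StN]) = Epos C" by (rule inj_onD[OF inj leq B'' B])
        moreover have "?m \<notin> Epos (C'' @ [StN])" using Epos_N[of C''] Epos_sub[of C''] Fam_len[OF C''(1)] by auto
        ultimately show False using mB by simp
      qed
      then have "Lam ?E ?V (Epos C) = insert ?m (Lam ?E ?V (Epos C) - {?m})" by (rule insert_Diff[symmetric])
      then have "Lam ?E ?V (Epos C) = insert ?m (st_Ltr C')" by (simp only: rem)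
      then show ?thesis using stC by simp
    qed
  qed
qed

lemma Ltr_ok: assumes "C \<in> paths n d" "d \<le> n" shows "weakly_above C (Ltr n d)"
  unfolding weakly_above_def
proof (intro allI impI)
  fix k assume k: "k \<le> length (Ltr n d)"
  have a: "num_e (take k C) \<le> min k d"
    using num_e_take_le[of k C] num_e_take_le_k[of k C] assms(1) by (simp add: paths_def num_e_def)
  have "num_e (take k (Ltr n d)) = min k d"
    by (simp add: Ltr_def num_e_def take_append min_def)
  then show "num_e (take k C) \<le> num_e (take k (Ltr n d))" using a by simp
qed

lemma pb_Fam: assumes "U \<in> paths n d"
  shows "paths_between n d U (Ltr n d) = Fam n d (\<lambda>k. num_e (take k U))"
proof -
  have dn: "d \<le> n" using assms num_e_le[of U] by (simp add: paths_def num_e_def)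
  show ?thesis
    unfolding paths_between_def Fam_def weakly_above_def
    using Ltr_ok[OF _ dn] by (auto simp: paths_def weakly_above_def)
qed


theorem theorem4p4:
  fixes n d :: nat and U :: "step list"
  assumes "U \<in> paths n d"
  shows "(\<forall>Lam. is_Lambda_family Lam \<longrightarrow>
            (\<forall>C\<in>paths_between n d U (Ltr n d).
               st_Ltr C = Lam {1..n} (lattice_path_matroid_bases n d U (Ltr n d)) (Epos C)))
       \<and> S_lex {1..n} (lattice_path_matroid_bases n d U (Ltr n d))
           = st_Ltr ` paths_between n d U (Ltr n d)"
proof -
  define u where "u = (\<lambda>k. num_e (take k U))"
  have PB: "paths_between n d U (Ltr n d) = Fam n d u" using pb_Fam[OF assms] by (simp add: u_def)
  have LB: "lattice_path_matroid_bases n d U (Ltr n d) = Epos ` Fam n d u"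
    by (simp add: lattice_path_matroid_bases_def PB)
  have P1: "\<forall>Lam. is_Lambda_family Lam \<longrightarrow> (\<forall>C\<in>Fam n d u. st_Ltr C = Lam {1..n} (Epos ` Fam n d u) (Epos C))"
    using Lam_Fam by blast
  have P2: "S_lex {1..n} (Epos ` Fam n d u) = st_Ltr ` Fam n d u"
  proof (cases "n = 0")
    case True
    then have U: "U = []" "d = 0" using assms by (auto simp: paths_def)
    have F: "Fam n d u = {[]}"
    proof (intro equalityI subsetI)
      fix D assume "D \<in> Fam n d u" then show "D \<in> {[]}" using Fam_len True by fastforce
    next
      fix D :: "step list" assume "D \<in> {[]}" then show "D \<in> Fam n d u" using True U by (simp add: Fam_def paths_def u_def)
    qed
    show ?thesis unfolding F using True by (simp add: S_lex_def st_Ltr_def)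
  next
    case False
    then show ?thesis using S_lex_Fam by simp
  qed
  show ?thesis unfolding LB PB using P1 P2 by simp
qed


end
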